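(* $R_4(VS)=58$: there is a 4-coloring of $[57]$ in which no two integers of the same color differ by a positive perfect square, and every 4-coloring of $[58]$ contains integers $a<b$ of the same color with $b-a$ a positive perfect square.
   Context: For $n\in\mathbb{N}$, $[n]=\{1,\dots,n\}$; a $c$-coloring of $[n]$ is a function $[n]\to[c]$. $R_c(VS)$ (the van der Square number) is the least positive integer $n$ such that every $c$-coloring of $[n]$ contains integers $a<b$ in $[n]$ of the same color with $b-a=x^2$ for some positive integer $x$. *)

theory Defs
  imports Main
begin

definition has_mono_square_diff :: "nat \<Rightarrow> (nat \<Rightarrow> nat) \<Rightarrow> bool" where
  "has_mono_square_diff n f \<longleftrightarrow>
     (\<exists>a b x. 1 \<le> a \<and> a < b \<and> b \<le> n \<and> f a = f b \<and> x > 0 \<and> b - a = x^2)"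

definition coloring :: "nat \<Rightarrow> nat \<Rightarrow> (nat \<Rightarrow> nat) \<Rightarrow> bool" where
  "coloring c n f \<longleftrightarrow> (\<forall>i\<in>{1..n}. f i \<in> {1..c})"

definition vds_number :: "nat \<Rightarrow> nat" where
  "vds_number c = (LEAST n. n > 0 \<and> (\<forall>f. coloring c n f \<longrightarrow> has_mono_square_diff n f))"

end

theory Submission
  imports Defs
begin

lemma ncl: "f a \<noteq> f b \<Longrightarrow> \<not> f a = (c::nat) \<or> \<not> f b = c" by auto

lemma L4: fixes P :: "nat \<Rightarrow> nat \<Rightarrow> bool"
  assumes "P 1 1 | P 1 2 | P 1 3 | P 1 4" "P 2 1 | P 2 2 | P 2 3 | P 2 4" "P 3 1 | P 3 2 | P 3 3 | P 3 4" "P 4 1 | P 4 2 | P 4 3 | P 4 4" "P 5 1 | P 5 2 | P 5 3 | P 5 4" "P 6 1 | P 6 2 | P 6 3 | P 6 4" "P 7 1 | P 7 2 | P 7 3 | P 7 4" "P 8 1 | P 8 2 | P 8 3 | P 8 4" "P 9 1 | P 9 2 | P 9 3 | P 9 4" "P 10 1 | P 10 2 | P 10 3 | P 10 4" "P 11 1 | P 11 2 | P 11 3 | P 11 4" "P 12 1 | P 12 2 | P 12 3 | P 12 4" "P 13 1 | P 13 2 | P 13 3 | P 13 4" "P 14 1 | P 14 2 | P 14 3 | P 14 4" "P 15 1 | P 15 2 | P 15 3 | P 15 4" "P 16 1 | P 16 2 | P 16 3 | P 16 4" "P 17 1 | P 17 2 | P 17 3 | P 17 4" "P 18 1 | P 18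 2 | P 18 3 | P 18 4" "P 19 1 | P 19 2 | P 19 3 | P 19 4" "P 20 1 | P 20 2 | P 20 3 | P 20 4" "P 21 1 | P 21 2 | P 21 3 | P 21 4" "P 22 1 | P 22 2 | P 22 3 | P 22 4" "P 23 1 | P 23 2 | P 23 3 | P 23 4" "P 24 1 | P 24 2 | P 24 3 | P 24 4" "P 25 1 | P 25 2 | P 25 3 | P 25 4" "P 26 1 | P 26 2 | P 26 3 | P 26 4" "P 27 1 | P 27 2 | P 27 3 | P 27 4" "P 28 1 | P 28 2 | P 28 3 | P 28 4" "P 29 1 | P 29 2 | P 29 3 | P 29 4" "P 30 1 | P 30 2 | P 30 3 | P 30 4" "P 31 1 | P 31 2 | P 31 3 | P 31 4" "P 32 1 | P 32 2 | P 32 3 | P 32 4" "P 33 1 | P 33 2 | P 33 3 | P 33 4" "P 34 1 | P 34 2 | P 34 3 | P 34 4" "P 35 1 | P 35 2 | P 35 3 | P 35 4" "P 36 1 | P 36 2 | P 36 3 | P 36 4" "P 37 1 | P 37 2 | P 37 3 | P 37 4" "P 38 1 | P 38 2 | P 38 3 | P 38 4" "P 39 1 | P 39 2 | P 39 3 | P 39 4" "P 40 1 | P 40 2 | P 40 3 | P 40 4" "P 41 1 | P 41 2 | P 41 3 | P 41 4" "P 42 1 | P 42 2 | P 42 3 | P 42 4" "P 43 1 | P 43 2 | P 43 3 | P 43 4" "P 44 1 | P 44 2 | P 44 3 | P 44 4" "P 45 1 | P 45 2 | P 45 3 | P 45 4" "P 46 1 | P 46 2 | P 46 3 | P 46 4"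 "P 47 1 | P 47 2 | P 47 3 | P 47 4" "P 48 1 | P 48 2 | P 48 3 | P 48 4" "P 49 1 | P 49 2 | P 49 3 | P 49 4" "P 50 1 | P 50 2 | P 50 3 | P 50 4" "P 51 1 | P 51 2 | P 51 3 | P 51 4" "P 52 1 | P 52 2 | P 52 3 | P 52 4" "P 53 1 | P 53 2 | P 53 3 | P 53 4" "P 54 1 | P 54 2 | P 54 3 | P 54 4" "P 55 1 | P 55 2 | P 55 3 | P 55 4" "P 56 1 | P 56 2 | P 56 3 | P 56 4" "P 57 1 | P 57 2 | P 57 3 | P 57 4" "P 58 1 | P 58 2 | P 58 3 | P 58 4" "~ P 1 1 | ~ P 2 1" "~ P 1 2 | ~ P 2 2" "~ P 1 3 | ~ P 2 3" "~ P 1 4 | ~ P 2 4" "~ P 1 1 | ~ P 5 1" "~ P 1 2 | ~ P 5 2" "~ P 1 3 | ~ P 5 3" "~ P 1 4 | ~ P 5 4" "~ P 1 1 | ~ P 10 1" "~ P 1 2 | ~ P 10 2" "~ P 1 3 | ~ P 10 3" "~ P 1 4 | ~ P 10 4" "~ P 1 1 | ~ P 17 1" "~ P 1 2 | ~ P 17 2" "~ P 1 3 | ~ P 17 3" "~ P 1 4 | ~ P 17 4" "~ P 1 1 | ~ P 26 1" "~ P 1 2 | ~ P 26 2" "~ P 1 3 | ~ P 26 3" "~ P 1 4 | ~ P 26 4" "~ P 1 1 | ~ P 37 1" "~ P 1 2 | ~ P 37 2" "~ P 1 3 | ~ P 37 3" "~ P 1 4 | ~ P 37 4" "~ P 1 1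 | ~ P 50 1" "~ P 1 2 | ~ P 50 2" "~ P 1 3 | ~ P 50 3" "~ P 1 4 | ~ P 50 4" "~ P 2 1 | ~ P 3 1" "~ P 2 2 | ~ P 3 2" "~ P 2 3 | ~ P 3 3" "~ P 2 4 | ~ P 3 4" "~ P 2 1 | ~ P 6 1" "~ P 2 2 | ~ P 6 2" "~ P 2 3 | ~ P 6 3" "~ P 2 4 | ~ P 6 4" "~ P 2 1 | ~ P 11 1" "~ P 2 2 | ~ P 11 2" "~ P 2 3 | ~ P 11 3" "~ P 2 4 | ~ P 11 4" "~ P 2 1 | ~ P 18 1" "~ P 2 2 | ~ P 18 2" "~ P 2 3 | ~ P 18 3" "~ P 2 4 | ~ P 18 4" "~ P 2 1 | ~ P 27 1" "~ P 2 2 | ~ P 27 2" "~ P 2 3 | ~ P 27 3" "~ P 2 4 | ~ P 27 4" "~ P 2 1 | ~ P 38 1" "~ P 2 2 | ~ P 38 2" "~ P 2 3 | ~ P 38 3" "~ P 2 4 | ~ P 38 4" "~ P 2 1 | ~ P 51 1" "~ P 2 2 | ~ P 51 2" "~ P 2 3 | ~ P 51 3" "~ P 2 4 | ~ P 51 4" "~ P 3 1 | ~ P 4 1" "~ P 3 2 | ~ P 4 2" "~ P 3 3 | ~ P 4 3" "~ P 3 4 | ~ P 4 4" "~ P 3 1 | ~ P 7 1" "~ P 3 2 | ~ P 7 2" "~ P 3 3 | ~ P 7 3" "~ P 3 4 | ~ P 7 4" "~ P 3 1 | ~ P 12 1" "~ P 3 2 | ~ P 12 2" "~ P 3 3 |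 ~ P 12 3" "~ P 3 4 | ~ P 12 4" "~ P 3 1 | ~ P 19 1" "~ P 3 2 | ~ P 19 2" "~ P 3 3 | ~ P 19 3" "~ P 3 4 | ~ P 19 4" "~ P 3 1 | ~ P 28 1" "~ P 3 2 | ~ P 28 2" "~ P 3 3 | ~ P 28 3" "~ P 3 4 | ~ P 28 4" "~ P 3 1 | ~ P 39 1" "~ P 3 2 | ~ P 39 2" "~ P 3 3 | ~ P 39 3" "~ P 3 4 | ~ P 39 4" "~ P 3 1 | ~ P 52 1" "~ P 3 2 | ~ P 52 2" "~ P 3 3 | ~ P 52 3" "~ P 3 4 | ~ P 52 4" "~ P 4 1 | ~ P 5 1" "~ P 4 2 | ~ P 5 2" "~ P 4 3 | ~ P 5 3" "~ P 4 4 | ~ P 5 4" "~ P 4 1 | ~ P 8 1" "~ P 4 2 | ~ P 8 2" "~ P 4 3 | ~ P 8 3" "~ P 4 4 | ~ P 8 4" "~ P 4 1 | ~ P 13 1" "~ P 4 2 | ~ P 13 2" "~ P 4 3 | ~ P 13 3" "~ P 4 4 | ~ P 13 4" "~ P 4 1 | ~ P 20 1" "~ P 4 2 | ~ P 20 2" "~ P 4 3 | ~ P 20 3" "~ P 4 4 | ~ P 20 4" "~ P 4 1 | ~ P 29 1" "~ P 4 2 | ~ P 29 2" "~ P 4 3 | ~ P 29 3" "~ P 4 4 | ~ P 29 4" "~ P 4 1 | ~ P 40 1" "~ P 4 2 | ~ P 40 2" "~ P 4 3 | ~ P 40 3" "~ P 4 4 | ~ P 40 4" "~ P 4 1 | ~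 P 53 1" "~ P 4 2 | ~ P 53 2" "~ P 4 3 | ~ P 53 3" "~ P 4 4 | ~ P 53 4" "~ P 5 1 | ~ P 6 1" "~ P 5 2 | ~ P 6 2" "~ P 5 3 | ~ P 6 3" "~ P 5 4 | ~ P 6 4" "~ P 5 1 | ~ P 9 1" "~ P 5 2 | ~ P 9 2" "~ P 5 3 | ~ P 9 3" "~ P 5 4 | ~ P 9 4" "~ P 5 1 | ~ P 14 1" "~ P 5 2 | ~ P 14 2" "~ P 5 3 | ~ P 14 3" "~ P 5 4 | ~ P 14 4" "~ P 5 1 | ~ P 21 1" "~ P 5 2 | ~ P 21 2" "~ P 5 3 | ~ P 21 3" "~ P 5 4 | ~ P 21 4" "~ P 5 1 | ~ P 30 1" "~ P 5 2 | ~ P 30 2" "~ P 5 3 | ~ P 30 3" "~ P 5 4 | ~ P 30 4" "~ P 5 1 | ~ P 41 1" "~ P 5 2 | ~ P 41 2" "~ P 5 3 | ~ P 41 3" "~ P 5 4 | ~ P 41 4" "~ P 5 1 | ~ P 54 1" "~ P 5 2 | ~ P 54 2" "~ P 5 3 | ~ P 54 3" "~ P 5 4 | ~ P 54 4" "~ P 6 1 | ~ P 7 1" "~ P 6 2 | ~ P 7 2" "~ P 6 3 | ~ P 7 3" "~ P 6 4 | ~ P 7 4" "~ P 6 1 | ~ P 10 1" "~ P 6 2 | ~ P 10 2" "~ P 6 3 | ~ P 10 3" "~ P 6 4 | ~ P 10 4" "~ P 6 1 | ~ P 15 1" "~ P 6 2 | ~ P 15 2" "~ P 6 3 | ~ P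 15 3" "~ P 6 4 | ~ P 15 4" "~ P 6 1 | ~ P 22 1" "~ P 6 2 | ~ P 22 2" "~ P 6 3 | ~ P 22 3" "~ P 6 4 | ~ P 22 4" "~ P 6 1 | ~ P 31 1" "~ P 6 2 | ~ P 31 2" "~ P 6 3 | ~ P 31 3" "~ P 6 4 | ~ P 31 4" "~ P 6 1 | ~ P 42 1" "~ P 6 2 | ~ P 42 2" "~ P 6 3 | ~ P 42 3" "~ P 6 4 | ~ P 42 4" "~ P 6 1 | ~ P 55 1" "~ P 6 2 | ~ P 55 2" "~ P 6 3 | ~ P 55 3" "~ P 6 4 | ~ P 55 4" "~ P 7 1 | ~ P 8 1" "~ P 7 2 | ~ P 8 2" "~ P 7 3 | ~ P 8 3" "~ P 7 4 | ~ P 8 4" "~ P 7 1 | ~ P 11 1" "~ P 7 2 | ~ P 11 2" "~ P 7 3 | ~ P 11 3" "~ P 7 4 | ~ P 11 4" "~ P 7 1 | ~ P 16 1" "~ P 7 2 | ~ P 16 2" "~ P 7 3 | ~ P 16 3" "~ P 7 4 | ~ P 16 4" "~ P 7 1 | ~ P 23 1" "~ P 7 2 | ~ P 23 2" "~ P 7 3 | ~ P 23 3" "~ P 7 4 | ~ P 23 4" "~ P 7 1 | ~ P 32 1" "~ P 7 2 | ~ P 32 2" "~ P 7 3 | ~ P 32 3" "~ P 7 4 | ~ P 32 4" "~ P 7 1 | ~ P 43 1" "~ P 7 2 | ~ P 43 2" "~ P 7 3 | ~ P 43 3" "~ P 7 4 | ~ P 43 4" "~ P 7 1 | ~ P 56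 1" "~ P 7 2 | ~ P 56 2" "~ P 7 3 | ~ P 56 3" "~ P 7 4 | ~ P 56 4" "~ P 8 1 | ~ P 9 1" "~ P 8 2 | ~ P 9 2" "~ P 8 3 | ~ P 9 3" "~ P 8 4 | ~ P 9 4" "~ P 8 1 | ~ P 12 1" "~ P 8 2 | ~ P 12 2" "~ P 8 3 | ~ P 12 3" "~ P 8 4 | ~ P 12 4" "~ P 8 1 | ~ P 17 1" "~ P 8 2 | ~ P 17 2" "~ P 8 3 | ~ P 17 3" "~ P 8 4 | ~ P 17 4" "~ P 8 1 | ~ P 24 1" "~ P 8 2 | ~ P 24 2" "~ P 8 3 | ~ P 24 3" "~ P 8 4 | ~ P 24 4" "~ P 8 1 | ~ P 33 1" "~ P 8 2 | ~ P 33 2" "~ P 8 3 | ~ P 33 3" "~ P 8 4 | ~ P 33 4" "~ P 8 1 | ~ P 44 1" "~ P 8 2 | ~ P 44 2" "~ P 8 3 | ~ P 44 3" "~ P 8 4 | ~ P 44 4" "~ P 8 1 | ~ P 57 1" "~ P 8 2 | ~ P 57 2" "~ P 8 3 | ~ P 57 3" "~ P 8 4 | ~ P 57 4" "~ P 9 1 | ~ P 10 1" "~ P 9 2 | ~ P 10 2" "~ P 9 3 | ~ P 10 3" "~ P 9 4 | ~ P 10 4" "~ P 9 1 | ~ P 13 1" "~ P 9 2 | ~ P 13 2" "~ P 9 3 | ~ P 13 3" "~ P 9 4 | ~ P 13 4" "~ P 9 1 | ~ P 18 1" "~ P 9 2 | ~ P 18 2" "~ P 9 3 | ~ P 18 3"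 "~ P 9 4 | ~ P 18 4" "~ P 9 1 | ~ P 25 1" "~ P 9 2 | ~ P 25 2" "~ P 9 3 | ~ P 25 3" "~ P 9 4 | ~ P 25 4" "~ P 9 1 | ~ P 34 1" "~ P 9 2 | ~ P 34 2" "~ P 9 3 | ~ P 34 3" "~ P 9 4 | ~ P 34 4" "~ P 9 1 | ~ P 45 1" "~ P 9 2 | ~ P 45 2" "~ P 9 3 | ~ P 45 3" "~ P 9 4 | ~ P 45 4" "~ P 9 1 | ~ P 58 1" "~ P 9 2 | ~ P 58 2" "~ P 9 3 | ~ P 58 3" "~ P 9 4 | ~ P 58 4" "~ P 10 1 | ~ P 11 1" "~ P 10 2 | ~ P 11 2" "~ P 10 3 | ~ P 11 3" "~ P 10 4 | ~ P 11 4" "~ P 10 1 | ~ P 14 1" "~ P 10 2 | ~ P 14 2" "~ P 10 3 | ~ P 14 3" "~ P 10 4 | ~ P 14 4" "~ P 10 1 | ~ P 19 1" "~ P 10 2 | ~ P 19 2" "~ P 10 3 | ~ P 19 3" "~ P 10 4 | ~ P 19 4" "~ P 10 1 | ~ P 26 1" "~ P 10 2 | ~ P 26 2" "~ P 10 3 | ~ P 26 3" "~ P 10 4 | ~ P 26 4" "~ P 10 1 | ~ P 35 1" "~ P 10 2 | ~ P 35 2" "~ P 10 3 | ~ P 35 3" "~ P 10 4 | ~ P 35 4" "~ P 10 1 | ~ P 46 1" "~ P 10 2 | ~ P 46 2" "~ P 10 3 | ~ P 46 3" "~ P 10 4 | ~ P 46 4" "~ P 11 1 | ~ P 12 1" "~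 P 11 2 | ~ P 12 2" "~ P 11 3 | ~ P 12 3" "~ P 11 4 | ~ P 12 4" "~ P 11 1 | ~ P 15 1" "~ P 11 2 | ~ P 15 2" "~ P 11 3 | ~ P 15 3" "~ P 11 4 | ~ P 15 4" "~ P 11 1 | ~ P 20 1" "~ P 11 2 | ~ P 20 2" "~ P 11 3 | ~ P 20 3" "~ P 11 4 | ~ P 20 4" "~ P 11 1 | ~ P 27 1" "~ P 11 2 | ~ P 27 2" "~ P 11 3 | ~ P 27 3" "~ P 11 4 | ~ P 27 4" "~ P 11 1 | ~ P 36 1" "~ P 11 2 | ~ P 36 2" "~ P 11 3 | ~ P 36 3" "~ P 11 4 | ~ P 36 4" "~ P 11 1 | ~ P 47 1" "~ P 11 2 | ~ P 47 2" "~ P 11 3 | ~ P 47 3" "~ P 11 4 | ~ P 47 4" "~ P 12 1 | ~ P 13 1" "~ P 12 2 | ~ P 13 2" "~ P 12 3 | ~ P 13 3" "~ P 12 4 | ~ P 13 4" "~ P 12 1 | ~ P 16 1" "~ P 12 2 | ~ P 16 2" "~ P 12 3 | ~ P 16 3" "~ P 12 4 | ~ P 16 4" "~ P 12 1 | ~ P 21 1" "~ P 12 2 | ~ P 21 2" "~ P 12 3 | ~ P 21 3" "~ P 12 4 | ~ P 21 4" "~ P 12 1 | ~ P 28 1" "~ P 12 2 | ~ P 28 2" "~ P 12 3 | ~ P 28 3" "~ P 12 4 | ~ P 28 4" "~ P 12 1 | ~ P 37 1" "~ P 12 2 | ~ P 37 2" "~ P 12 3 | ~ P 37 3" "~ P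 12 4 | ~ P 37 4" "~ P 12 1 | ~ P 48 1" "~ P 12 2 | ~ P 48 2" "~ P 12 3 | ~ P 48 3" "~ P 12 4 | ~ P 48 4" "~ P 13 1 | ~ P 14 1" "~ P 13 2 | ~ P 14 2" "~ P 13 3 | ~ P 14 3" "~ P 13 4 | ~ P 14 4" "~ P 13 1 | ~ P 17 1" "~ P 13 2 | ~ P 17 2" "~ P 13 3 | ~ P 17 3" "~ P 13 4 | ~ P 17 4" "~ P 13 1 | ~ P 22 1" "~ P 13 2 | ~ P 22 2" "~ P 13 3 | ~ P 22 3" "~ P 13 4 | ~ P 22 4" "~ P 13 1 | ~ P 29 1" "~ P 13 2 | ~ P 29 2" "~ P 13 3 | ~ P 29 3" "~ P 13 4 | ~ P 29 4" "~ P 13 1 | ~ P 38 1" "~ P 13 2 | ~ P 38 2" "~ P 13 3 | ~ P 38 3" "~ P 13 4 | ~ P 38 4" "~ P 13 1 | ~ P 49 1" "~ P 13 2 | ~ P 49 2" "~ P 13 3 | ~ P 49 3" "~ P 13 4 | ~ P 49 4" "~ P 14 1 | ~ P 15 1" "~ P 14 2 | ~ P 15 2" "~ P 14 3 | ~ P 15 3" "~ P 14 4 | ~ P 15 4" "~ P 14 1 | ~ P 18 1" "~ P 14 2 | ~ P 18 2" "~ P 14 3 | ~ P 18 3" "~ P 14 4 | ~ P 18 4" "~ P 14 1 | ~ P 23 1" "~ P 14 2 | ~ P 23 2" "~ P 14 3 | ~ P 23 3" "~ P 14 4 | ~ P 23 4" "~ P 14 1 | ~ P 30 1" "~ P 14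 2 | ~ P 30 2" "~ P 14 3 | ~ P 30 3" "~ P 14 4 | ~ P 30 4" "~ P 14 1 | ~ P 39 1" "~ P 14 2 | ~ P 39 2" "~ P 14 3 | ~ P 39 3" "~ P 14 4 | ~ P 39 4" "~ P 14 1 | ~ P 50 1" "~ P 14 2 | ~ P 50 2" "~ P 14 3 | ~ P 50 3" "~ P 14 4 | ~ P 50 4" "~ P 15 1 | ~ P 16 1" "~ P 15 2 | ~ P 16 2" "~ P 15 3 | ~ P 16 3" "~ P 15 4 | ~ P 16 4" "~ P 15 1 | ~ P 19 1" "~ P 15 2 | ~ P 19 2" "~ P 15 3 | ~ P 19 3" "~ P 15 4 | ~ P 19 4" "~ P 15 1 | ~ P 24 1" "~ P 15 2 | ~ P 24 2" "~ P 15 3 | ~ P 24 3" "~ P 15 4 | ~ P 24 4" "~ P 15 1 | ~ P 31 1" "~ P 15 2 | ~ P 31 2" "~ P 15 3 | ~ P 31 3" "~ P 15 4 | ~ P 31 4" "~ P 15 1 | ~ P 40 1" "~ P 15 2 | ~ P 40 2" "~ P 15 3 | ~ P 40 3" "~ P 15 4 | ~ P 40 4" "~ P 15 1 | ~ P 51 1" "~ P 15 2 | ~ P 51 2" "~ P 15 3 | ~ P 51 3" "~ P 15 4 | ~ P 51 4" "~ P 16 1 | ~ P 17 1" "~ P 16 2 | ~ P 17 2" "~ P 16 3 | ~ P 17 3" "~ P 16 4 | ~ P 17 4" "~ P 16 1 | ~ P 20 1" "~ P 16 2 | ~ P 20 2" "~ P 16 3 | ~ P 20 3" "~ P 16 4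 | ~ P 20 4" "~ P 16 1 | ~ P 25 1" "~ P 16 2 | ~ P 25 2" "~ P 16 3 | ~ P 25 3" "~ P 16 4 | ~ P 25 4" "~ P 16 1 | ~ P 32 1" "~ P 16 2 | ~ P 32 2" "~ P 16 3 | ~ P 32 3" "~ P 16 4 | ~ P 32 4" "~ P 16 1 | ~ P 41 1" "~ P 16 2 | ~ P 41 2" "~ P 16 3 | ~ P 41 3" "~ P 16 4 | ~ P 41 4" "~ P 16 1 | ~ P 52 1" "~ P 16 2 | ~ P 52 2" "~ P 16 3 | ~ P 52 3" "~ P 16 4 | ~ P 52 4" "~ P 17 1 | ~ P 18 1" "~ P 17 2 | ~ P 18 2" "~ P 17 3 | ~ P 18 3" "~ P 17 4 | ~ P 18 4" "~ P 17 1 | ~ P 21 1" "~ P 17 2 | ~ P 21 2" "~ P 17 3 | ~ P 21 3" "~ P 17 4 | ~ P 21 4" "~ P 17 1 | ~ P 26 1" "~ P 17 2 | ~ P 26 2" "~ P 17 3 | ~ P 26 3" "~ P 17 4 | ~ P 26 4" "~ P 17 1 | ~ P 33 1" "~ P 17 2 | ~ P 33 2" "~ P 17 3 | ~ P 33 3" "~ P 17 4 | ~ P 33 4" "~ P 17 1 | ~ P 42 1" "~ P 17 2 | ~ P 42 2" "~ P 17 3 | ~ P 42 3" "~ P 17 4 | ~ P 42 4" "~ P 17 1 | ~ P 53 1" "~ P 17 2 | ~ P 53 2" "~ P 17 3 | ~ P 53 3" "~ P 17 4 | ~ P 53 4" "~ P 18 1 | ~ P 19 1" "~ P 18 2 |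 ~ P 19 2" "~ P 18 3 | ~ P 19 3" "~ P 18 4 | ~ P 19 4" "~ P 18 1 | ~ P 22 1" "~ P 18 2 | ~ P 22 2" "~ P 18 3 | ~ P 22 3" "~ P 18 4 | ~ P 22 4" "~ P 18 1 | ~ P 27 1" "~ P 18 2 | ~ P 27 2" "~ P 18 3 | ~ P 27 3" "~ P 18 4 | ~ P 27 4" "~ P 18 1 | ~ P 34 1" "~ P 18 2 | ~ P 34 2" "~ P 18 3 | ~ P 34 3" "~ P 18 4 | ~ P 34 4" "~ P 18 1 | ~ P 43 1" "~ P 18 2 | ~ P 43 2" "~ P 18 3 | ~ P 43 3" "~ P 18 4 | ~ P 43 4" "~ P 18 1 | ~ P 54 1" "~ P 18 2 | ~ P 54 2" "~ P 18 3 | ~ P 54 3" "~ P 18 4 | ~ P 54 4" "~ P 19 1 | ~ P 20 1" "~ P 19 2 | ~ P 20 2" "~ P 19 3 | ~ P 20 3" "~ P 19 4 | ~ P 20 4" "~ P 19 1 | ~ P 23 1" "~ P 19 2 | ~ P 23 2" "~ P 19 3 | ~ P 23 3" "~ P 19 4 | ~ P 23 4" "~ P 19 1 | ~ P 28 1" "~ P 19 2 | ~ P 28 2" "~ P 19 3 | ~ P 28 3" "~ P 19 4 | ~ P 28 4" "~ P 19 1 | ~ P 35 1" "~ P 19 2 | ~ P 35 2" "~ P 19 3 | ~ P 35 3" "~ P 19 4 | ~ P 35 4" "~ P 19 1 | ~ P 44 1" "~ P 19 2 | ~ P 44 2" "~ P 19 3 | ~ P 44 3" "~ P 19 4 | ~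 P 44 4" "~ P 19 1 | ~ P 55 1" "~ P 19 2 | ~ P 55 2" "~ P 19 3 | ~ P 55 3" "~ P 19 4 | ~ P 55 4" "~ P 20 1 | ~ P 21 1" "~ P 20 2 | ~ P 21 2" "~ P 20 3 | ~ P 21 3" "~ P 20 4 | ~ P 21 4" "~ P 20 1 | ~ P 24 1" "~ P 20 2 | ~ P 24 2" "~ P 20 3 | ~ P 24 3" "~ P 20 4 | ~ P 24 4" "~ P 20 1 | ~ P 29 1" "~ P 20 2 | ~ P 29 2" "~ P 20 3 | ~ P 29 3" "~ P 20 4 | ~ P 29 4" "~ P 20 1 | ~ P 36 1" "~ P 20 2 | ~ P 36 2" "~ P 20 3 | ~ P 36 3" "~ P 20 4 | ~ P 36 4" "~ P 20 1 | ~ P 45 1" "~ P 20 2 | ~ P 45 2" "~ P 20 3 | ~ P 45 3" "~ P 20 4 | ~ P 45 4" "~ P 20 1 | ~ P 56 1" "~ P 20 2 | ~ P 56 2" "~ P 20 3 | ~ P 56 3" "~ P 20 4 | ~ P 56 4" "~ P 21 1 | ~ P 22 1" "~ P 21 2 | ~ P 22 2" "~ P 21 3 | ~ P 22 3" "~ P 21 4 | ~ P 22 4" "~ P 21 1 | ~ P 25 1" "~ P 21 2 | ~ P 25 2" "~ P 21 3 | ~ P 25 3" "~ P 21 4 | ~ P 25 4" "~ P 21 1 | ~ P 30 1" "~ P 21 2 | ~ P 30 2" "~ P 21 3 | ~ P 30 3" "~ P 21 4 | ~ P 30 4" "~ P 21 1 | ~ P 37 1" "~ P 21 2 | ~ P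 37 2" "~ P 21 3 | ~ P 37 3" "~ P 21 4 | ~ P 37 4" "~ P 21 1 | ~ P 46 1" "~ P 21 2 | ~ P 46 2" "~ P 21 3 | ~ P 46 3" "~ P 21 4 | ~ P 46 4" "~ P 21 1 | ~ P 57 1" "~ P 21 2 | ~ P 57 2" "~ P 21 3 | ~ P 57 3" "~ P 21 4 | ~ P 57 4" "~ P 22 1 | ~ P 23 1" "~ P 22 2 | ~ P 23 2" "~ P 22 3 | ~ P 23 3" "~ P 22 4 | ~ P 23 4" "~ P 22 1 | ~ P 26 1" "~ P 22 2 | ~ P 26 2" "~ P 22 3 | ~ P 26 3" "~ P 22 4 | ~ P 26 4" "~ P 22 1 | ~ P 31 1" "~ P 22 2 | ~ P 31 2" "~ P 22 3 | ~ P 31 3" "~ P 22 4 | ~ P 31 4" "~ P 22 1 | ~ P 38 1" "~ P 22 2 | ~ P 38 2" "~ P 22 3 | ~ P 38 3" "~ P 22 4 | ~ P 38 4" "~ P 22 1 | ~ P 47 1" "~ P 22 2 | ~ P 47 2" "~ P 22 3 | ~ P 47 3" "~ P 22 4 | ~ P 47 4" "~ P 22 1 | ~ P 58 1" "~ P 22 2 | ~ P 58 2" "~ P 22 3 | ~ P 58 3" "~ P 22 4 | ~ P 58 4" "~ P 23 1 | ~ P 24 1" "~ P 23 2 | ~ P 24 2" "~ P 23 3 | ~ P 24 3" "~ P 23 4 | ~ P 24 4" "~ P 23 1 | ~ P 27 1" "~ P 23 2 | ~ P 27 2" "~ P 23 3 | ~ P 27 3" "~ P 23 4 | ~ P 27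 4" "~ P 23 1 | ~ P 32 1" "~ P 23 2 | ~ P 32 2" "~ P 23 3 | ~ P 32 3" "~ P 23 4 | ~ P 32 4" "~ P 23 1 | ~ P 39 1" "~ P 23 2 | ~ P 39 2" "~ P 23 3 | ~ P 39 3" "~ P 23 4 | ~ P 39 4" "~ P 23 1 | ~ P 48 1" "~ P 23 2 | ~ P 48 2" "~ P 23 3 | ~ P 48 3" "~ P 23 4 | ~ P 48 4" "~ P 24 1 | ~ P 25 1" "~ P 24 2 | ~ P 25 2" "~ P 24 3 | ~ P 25 3" "~ P 24 4 | ~ P 25 4" "~ P 24 1 | ~ P 28 1" "~ P 24 2 | ~ P 28 2" "~ P 24 3 | ~ P 28 3" "~ P 24 4 | ~ P 28 4" "~ P 24 1 | ~ P 33 1" "~ P 24 2 | ~ P 33 2" "~ P 24 3 | ~ P 33 3" "~ P 24 4 | ~ P 33 4" "~ P 24 1 | ~ P 40 1" "~ P 24 2 | ~ P 40 2" "~ P 24 3 | ~ P 40 3" "~ P 24 4 | ~ P 40 4" "~ P 24 1 | ~ P 49 1" "~ P 24 2 | ~ P 49 2" "~ P 24 3 | ~ P 49 3" "~ P 24 4 | ~ P 49 4" "~ P 25 1 | ~ P 26 1" "~ P 25 2 | ~ P 26 2" "~ P 25 3 | ~ P 26 3" "~ P 25 4 | ~ P 26 4" "~ P 25 1 | ~ P 29 1" "~ P 25 2 | ~ P 29 2" "~ P 25 3 | ~ P 29 3" "~ P 25 4 | ~ P 29 4" "~ P 25 1 | ~ P 34 1" "~ P 25 2 | ~ P 34 2"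 "~ P 25 3 | ~ P 34 3" "~ P 25 4 | ~ P 34 4" "~ P 25 1 | ~ P 41 1" "~ P 25 2 | ~ P 41 2" "~ P 25 3 | ~ P 41 3" "~ P 25 4 | ~ P 41 4" "~ P 25 1 | ~ P 50 1" "~ P 25 2 | ~ P 50 2" "~ P 25 3 | ~ P 50 3" "~ P 25 4 | ~ P 50 4" "~ P 26 1 | ~ P 27 1" "~ P 26 2 | ~ P 27 2" "~ P 26 3 | ~ P 27 3" "~ P 26 4 | ~ P 27 4" "~ P 26 1 | ~ P 30 1" "~ P 26 2 | ~ P 30 2" "~ P 26 3 | ~ P 30 3" "~ P 26 4 | ~ P 30 4" "~ P 26 1 | ~ P 35 1" "~ P 26 2 | ~ P 35 2" "~ P 26 3 | ~ P 35 3" "~ P 26 4 | ~ P 35 4" "~ P 26 1 | ~ P 42 1" "~ P 26 2 | ~ P 42 2" "~ P 26 3 | ~ P 42 3" "~ P 26 4 | ~ P 42 4" "~ P 26 1 | ~ P 51 1" "~ P 26 2 | ~ P 51 2" "~ P 26 3 | ~ P 51 3" "~ P 26 4 | ~ P 51 4" "~ P 27 1 | ~ P 28 1" "~ P 27 2 | ~ P 28 2" "~ P 27 3 | ~ P 28 3" "~ P 27 4 | ~ P 28 4" "~ P 27 1 | ~ P 31 1" "~ P 27 2 | ~ P 31 2" "~ P 27 3 | ~ P 31 3" "~ P 27 4 | ~ P 31 4" "~ P 27 1 | ~ P 36 1" "~ P 27 2 | ~ P 36 2" "~ P 27 3 | ~ P 36 3" "~ P 27 4 | ~ P 36 4" "~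 P 27 1 | ~ P 43 1" "~ P 27 2 | ~ P 43 2" "~ P 27 3 | ~ P 43 3" "~ P 27 4 | ~ P 43 4" "~ P 27 1 | ~ P 52 1" "~ P 27 2 | ~ P 52 2" "~ P 27 3 | ~ P 52 3" "~ P 27 4 | ~ P 52 4" "~ P 28 1 | ~ P 29 1" "~ P 28 2 | ~ P 29 2" "~ P 28 3 | ~ P 29 3" "~ P 28 4 | ~ P 29 4" "~ P 28 1 | ~ P 32 1" "~ P 28 2 | ~ P 32 2" "~ P 28 3 | ~ P 32 3" "~ P 28 4 | ~ P 32 4" "~ P 28 1 | ~ P 37 1" "~ P 28 2 | ~ P 37 2" "~ P 28 3 | ~ P 37 3" "~ P 28 4 | ~ P 37 4" "~ P 28 1 | ~ P 44 1" "~ P 28 2 | ~ P 44 2" "~ P 28 3 | ~ P 44 3" "~ P 28 4 | ~ P 44 4" "~ P 28 1 | ~ P 53 1" "~ P 28 2 | ~ P 53 2" "~ P 28 3 | ~ P 53 3" "~ P 28 4 | ~ P 53 4" "~ P 29 1 | ~ P 30 1" "~ P 29 2 | ~ P 30 2" "~ P 29 3 | ~ P 30 3" "~ P 29 4 | ~ P 30 4" "~ P 29 1 | ~ P 33 1" "~ P 29 2 | ~ P 33 2" "~ P 29 3 | ~ P 33 3" "~ P 29 4 | ~ P 33 4" "~ P 29 1 | ~ P 38 1" "~ P 29 2 | ~ P 38 2" "~ P 29 3 | ~ P 38 3" "~ P 29 4 | ~ P 38 4" "~ P 29 1 | ~ P 45 1" "~ P 29 2 | ~ P 45 2" "~ P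 29 3 | ~ P 45 3" "~ P 29 4 | ~ P 45 4" "~ P 29 1 | ~ P 54 1" "~ P 29 2 | ~ P 54 2" "~ P 29 3 | ~ P 54 3" "~ P 29 4 | ~ P 54 4" "~ P 30 1 | ~ P 31 1" "~ P 30 2 | ~ P 31 2" "~ P 30 3 | ~ P 31 3" "~ P 30 4 | ~ P 31 4" "~ P 30 1 | ~ P 34 1" "~ P 30 2 | ~ P 34 2" "~ P 30 3 | ~ P 34 3" "~ P 30 4 | ~ P 34 4" "~ P 30 1 | ~ P 39 1" "~ P 30 2 | ~ P 39 2" "~ P 30 3 | ~ P 39 3" "~ P 30 4 | ~ P 39 4" "~ P 30 1 | ~ P 46 1" "~ P 30 2 | ~ P 46 2" "~ P 30 3 | ~ P 46 3" "~ P 30 4 | ~ P 46 4" "~ P 30 1 | ~ P 55 1" "~ P 30 2 | ~ P 55 2" "~ P 30 3 | ~ P 55 3" "~ P 30 4 | ~ P 55 4" "~ P 31 1 | ~ P 32 1" "~ P 31 2 | ~ P 32 2" "~ P 31 3 | ~ P 32 3" "~ P 31 4 | ~ P 32 4" "~ P 31 1 | ~ P 35 1" "~ P 31 2 | ~ P 35 2" "~ P 31 3 | ~ P 35 3" "~ P 31 4 | ~ P 35 4" "~ P 31 1 | ~ P 40 1" "~ P 31 2 | ~ P 40 2" "~ P 31 3 | ~ P 40 3" "~ P 31 4 | ~ P 40 4" "~ P 31 1 | ~ P 47 1" "~ P 31 2 | ~ P 47 2" "~ P 31 3 | ~ P 47 3" "~ P 31 4 | ~ P 47 4" "~ P 31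 1 | ~ P 56 1" "~ P 31 2 | ~ P 56 2" "~ P 31 3 | ~ P 56 3" "~ P 31 4 | ~ P 56 4" "~ P 32 1 | ~ P 33 1" "~ P 32 2 | ~ P 33 2" "~ P 32 3 | ~ P 33 3" "~ P 32 4 | ~ P 33 4" "~ P 32 1 | ~ P 36 1" "~ P 32 2 | ~ P 36 2" "~ P 32 3 | ~ P 36 3" "~ P 32 4 | ~ P 36 4" "~ P 32 1 | ~ P 41 1" "~ P 32 2 | ~ P 41 2" "~ P 32 3 | ~ P 41 3" "~ P 32 4 | ~ P 41 4" "~ P 32 1 | ~ P 48 1" "~ P 32 2 | ~ P 48 2" "~ P 32 3 | ~ P 48 3" "~ P 32 4 | ~ P 48 4" "~ P 32 1 | ~ P 57 1" "~ P 32 2 | ~ P 57 2" "~ P 32 3 | ~ P 57 3" "~ P 32 4 | ~ P 57 4" "~ P 33 1 | ~ P 34 1" "~ P 33 2 | ~ P 34 2" "~ P 33 3 | ~ P 34 3" "~ P 33 4 | ~ P 34 4" "~ P 33 1 | ~ P 37 1" "~ P 33 2 | ~ P 37 2" "~ P 33 3 | ~ P 37 3" "~ P 33 4 | ~ P 37 4" "~ P 33 1 | ~ P 42 1" "~ P 33 2 | ~ P 42 2" "~ P 33 3 | ~ P 42 3" "~ P 33 4 | ~ P 42 4" "~ P 33 1 | ~ P 49 1" "~ P 33 2 | ~ P 49 2" "~ P 33 3 | ~ P 49 3" "~ P 33 4 | ~ P 49 4" "~ P 33 1 | ~ P 58 1" "~ P 33 2 | ~ P 58 2" "~ P 33 3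 | ~ P 58 3" "~ P 33 4 | ~ P 58 4" "~ P 34 1 | ~ P 35 1" "~ P 34 2 | ~ P 35 2" "~ P 34 3 | ~ P 35 3" "~ P 34 4 | ~ P 35 4" "~ P 34 1 | ~ P 38 1" "~ P 34 2 | ~ P 38 2" "~ P 34 3 | ~ P 38 3" "~ P 34 4 | ~ P 38 4" "~ P 34 1 | ~ P 43 1" "~ P 34 2 | ~ P 43 2" "~ P 34 3 | ~ P 43 3" "~ P 34 4 | ~ P 43 4" "~ P 34 1 | ~ P 50 1" "~ P 34 2 | ~ P 50 2" "~ P 34 3 | ~ P 50 3" "~ P 34 4 | ~ P 50 4" "~ P 35 1 | ~ P 36 1" "~ P 35 2 | ~ P 36 2" "~ P 35 3 | ~ P 36 3" "~ P 35 4 | ~ P 36 4" "~ P 35 1 | ~ P 39 1" "~ P 35 2 | ~ P 39 2" "~ P 35 3 | ~ P 39 3" "~ P 35 4 | ~ P 39 4" "~ P 35 1 | ~ P 44 1" "~ P 35 2 | ~ P 44 2" "~ P 35 3 | ~ P 44 3" "~ P 35 4 | ~ P 44 4" "~ P 35 1 | ~ P 51 1" "~ P 35 2 | ~ P 51 2" "~ P 35 3 | ~ P 51 3" "~ P 35 4 | ~ P 51 4" "~ P 36 1 | ~ P 37 1" "~ P 36 2 | ~ P 37 2" "~ P 36 3 | ~ P 37 3" "~ P 36 4 | ~ P 37 4" "~ P 36 1 | ~ P 40 1" "~ P 36 2 | ~ P 40 2" "~ P 36 3 | ~ P 40 3" "~ P 36 4 | ~ P 40 4" "~ P 36 1 |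 ~ P 45 1" "~ P 36 2 | ~ P 45 2" "~ P 36 3 | ~ P 45 3" "~ P 36 4 | ~ P 45 4" "~ P 36 1 | ~ P 52 1" "~ P 36 2 | ~ P 52 2" "~ P 36 3 | ~ P 52 3" "~ P 36 4 | ~ P 52 4" "~ P 37 1 | ~ P 38 1" "~ P 37 2 | ~ P 38 2" "~ P 37 3 | ~ P 38 3" "~ P 37 4 | ~ P 38 4" "~ P 37 1 | ~ P 41 1" "~ P 37 2 | ~ P 41 2" "~ P 37 3 | ~ P 41 3" "~ P 37 4 | ~ P 41 4" "~ P 37 1 | ~ P 46 1" "~ P 37 2 | ~ P 46 2" "~ P 37 3 | ~ P 46 3" "~ P 37 4 | ~ P 46 4" "~ P 37 1 | ~ P 53 1" "~ P 37 2 | ~ P 53 2" "~ P 37 3 | ~ P 53 3" "~ P 37 4 | ~ P 53 4" "~ P 38 1 | ~ P 39 1" "~ P 38 2 | ~ P 39 2" "~ P 38 3 | ~ P 39 3" "~ P 38 4 | ~ P 39 4" "~ P 38 1 | ~ P 42 1" "~ P 38 2 | ~ P 42 2" "~ P 38 3 | ~ P 42 3" "~ P 38 4 | ~ P 42 4" "~ P 38 1 | ~ P 47 1" "~ P 38 2 | ~ P 47 2" "~ P 38 3 | ~ P 47 3" "~ P 38 4 | ~ P 47 4" "~ P 38 1 | ~ P 54 1" "~ P 38 2 | ~ P 54 2" "~ P 38 3 | ~ P 54 3" "~ P 38 4 | ~ P 54 4" "~ P 39 1 | ~ P 40 1" "~ P 39 2 | ~ P 40 2" "~ P 39 3 | ~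 P 40 3" "~ P 39 4 | ~ P 40 4" "~ P 39 1 | ~ P 43 1" "~ P 39 2 | ~ P 43 2" "~ P 39 3 | ~ P 43 3" "~ P 39 4 | ~ P 43 4" "~ P 39 1 | ~ P 48 1" "~ P 39 2 | ~ P 48 2" "~ P 39 3 | ~ P 48 3" "~ P 39 4 | ~ P 48 4" "~ P 39 1 | ~ P 55 1" "~ P 39 2 | ~ P 55 2" "~ P 39 3 | ~ P 55 3" "~ P 39 4 | ~ P 55 4" "~ P 40 1 | ~ P 41 1" "~ P 40 2 | ~ P 41 2" "~ P 40 3 | ~ P 41 3" "~ P 40 4 | ~ P 41 4" "~ P 40 1 | ~ P 44 1" "~ P 40 2 | ~ P 44 2" "~ P 40 3 | ~ P 44 3" "~ P 40 4 | ~ P 44 4" "~ P 40 1 | ~ P 49 1" "~ P 40 2 | ~ P 49 2" "~ P 40 3 | ~ P 49 3" "~ P 40 4 | ~ P 49 4" "~ P 40 1 | ~ P 56 1" "~ P 40 2 | ~ P 56 2" "~ P 40 3 | ~ P 56 3" "~ P 40 4 | ~ P 56 4" "~ P 41 1 | ~ P 42 1" "~ P 41 2 | ~ P 42 2" "~ P 41 3 | ~ P 42 3" "~ P 41 4 | ~ P 42 4" "~ P 41 1 | ~ P 45 1" "~ P 41 2 | ~ P 45 2" "~ P 41 3 | ~ P 45 3" "~ P 41 4 | ~ P 45 4" "~ P 41 1 | ~ P 50 1" "~ P 41 2 | ~ P 50 2" "~ P 41 3 | ~ P 50 3" "~ P 41 4 | ~ P 50 4" "~ P 41 1 | ~ P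 57 1" "~ P 41 2 | ~ P 57 2" "~ P 41 3 | ~ P 57 3" "~ P 41 4 | ~ P 57 4" "~ P 42 1 | ~ P 43 1" "~ P 42 2 | ~ P 43 2" "~ P 42 3 | ~ P 43 3" "~ P 42 4 | ~ P 43 4" "~ P 42 1 | ~ P 46 1" "~ P 42 2 | ~ P 46 2" "~ P 42 3 | ~ P 46 3" "~ P 42 4 | ~ P 46 4" "~ P 42 1 | ~ P 51 1" "~ P 42 2 | ~ P 51 2" "~ P 42 3 | ~ P 51 3" "~ P 42 4 | ~ P 51 4" "~ P 42 1 | ~ P 58 1" "~ P 42 2 | ~ P 58 2" "~ P 42 3 | ~ P 58 3" "~ P 42 4 | ~ P 58 4" "~ P 43 1 | ~ P 44 1" "~ P 43 2 | ~ P 44 2" "~ P 43 3 | ~ P 44 3" "~ P 43 4 | ~ P 44 4" "~ P 43 1 | ~ P 47 1" "~ P 43 2 | ~ P 47 2" "~ P 43 3 | ~ P 47 3" "~ P 43 4 | ~ P 47 4" "~ P 43 1 | ~ P 52 1" "~ P 43 2 | ~ P 52 2" "~ P 43 3 | ~ P 52 3" "~ P 43 4 | ~ P 52 4" "~ P 44 1 | ~ P 45 1" "~ P 44 2 | ~ P 45 2" "~ P 44 3 | ~ P 45 3" "~ P 44 4 | ~ P 45 4" "~ P 44 1 | ~ P 48 1" "~ P 44 2 | ~ P 48 2" "~ P 44 3 | ~ P 48 3" "~ P 44 4 | ~ P 48 4" "~ P 44 1 | ~ P 53 1" "~ P 44 2 | ~ P 53 2" "~ P 44 3 | ~ P 53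 3" "~ P 44 4 | ~ P 53 4" "~ P 45 1 | ~ P 46 1" "~ P 45 2 | ~ P 46 2" "~ P 45 3 | ~ P 46 3" "~ P 45 4 | ~ P 46 4" "~ P 45 1 | ~ P 49 1" "~ P 45 2 | ~ P 49 2" "~ P 45 3 | ~ P 49 3" "~ P 45 4 | ~ P 49 4" "~ P 45 1 | ~ P 54 1" "~ P 45 2 | ~ P 54 2" "~ P 45 3 | ~ P 54 3" "~ P 45 4 | ~ P 54 4" "~ P 46 1 | ~ P 47 1" "~ P 46 2 | ~ P 47 2" "~ P 46 3 | ~ P 47 3" "~ P 46 4 | ~ P 47 4" "~ P 46 1 | ~ P 50 1" "~ P 46 2 | ~ P 50 2" "~ P 46 3 | ~ P 50 3" "~ P 46 4 | ~ P 50 4" "~ P 46 1 | ~ P 55 1" "~ P 46 2 | ~ P 55 2" "~ P 46 3 | ~ P 55 3" "~ P 46 4 | ~ P 55 4" "~ P 47 1 | ~ P 48 1" "~ P 47 2 | ~ P 48 2" "~ P 47 3 | ~ P 48 3" "~ P 47 4 | ~ P 48 4" "~ P 47 1 | ~ P 51 1" "~ P 47 2 | ~ P 51 2" "~ P 47 3 | ~ P 51 3" "~ P 47 4 | ~ P 51 4" "~ P 47 1 | ~ P 56 1" "~ P 47 2 | ~ P 56 2" "~ P 47 3 | ~ P 56 3" "~ P 47 4 | ~ P 56 4" "~ P 48 1 | ~ P 49 1" "~ P 48 2 | ~ P 49 2" "~ P 48 3 | ~ P 49 3" "~ P 48 4 | ~ P 49 4" "~ P 48 1 | ~ P 52 1"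 "~ P 48 2 | ~ P 52 2" "~ P 48 3 | ~ P 52 3" "~ P 48 4 | ~ P 52 4" "~ P 48 1 | ~ P 57 1" "~ P 48 2 | ~ P 57 2" "~ P 48 3 | ~ P 57 3" "~ P 48 4 | ~ P 57 4" "~ P 49 1 | ~ P 50 1" "~ P 49 2 | ~ P 50 2" "~ P 49 3 | ~ P 50 3" "~ P 49 4 | ~ P 50 4" "~ P 49 1 | ~ P 53 1" "~ P 49 2 | ~ P 53 2" "~ P 49 3 | ~ P 53 3" "~ P 49 4 | ~ P 53 4" "~ P 49 1 | ~ P 58 1" "~ P 49 2 | ~ P 58 2" "~ P 49 3 | ~ P 58 3" "~ P 49 4 | ~ P 58 4" "~ P 50 1 | ~ P 51 1" "~ P 50 2 | ~ P 51 2" "~ P 50 3 | ~ P 51 3" "~ P 50 4 | ~ P 51 4" "~ P 50 1 | ~ P 54 1" "~ P 50 2 | ~ P 54 2" "~ P 50 3 | ~ P 54 3" "~ P 50 4 | ~ P 54 4" "~ P 51 1 | ~ P 52 1" "~ P 51 2 | ~ P 52 2" "~ P 51 3 | ~ P 52 3" "~ P 51 4 | ~ P 52 4" "~ P 51 1 | ~ P 55 1" "~ P 51 2 | ~ P 55 2" "~ P 51 3 | ~ P 55 3" "~ P 51 4 | ~ P 55 4" "~ P 52 1 | ~ P 53 1" "~ P 52 2 | ~ P 53 2" "~ P 52 3 | ~ P 53 3" "~ P 52 4 | ~ P 53 4" "~ P 52 1 | ~ P 56 1" "~ P 52 2 | ~ P 56 2" "~ P 52 3 | ~ P 56 3" "~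 P 52 4 | ~ P 56 4" "~ P 53 1 | ~ P 54 1" "~ P 53 2 | ~ P 54 2" "~ P 53 3 | ~ P 54 3" "~ P 53 4 | ~ P 54 4" "~ P 53 1 | ~ P 57 1" "~ P 53 2 | ~ P 57 2" "~ P 53 3 | ~ P 57 3" "~ P 53 4 | ~ P 57 4" "~ P 54 1 | ~ P 55 1" "~ P 54 2 | ~ P 55 2" "~ P 54 3 | ~ P 55 3" "~ P 54 4 | ~ P 55 4" "~ P 54 1 | ~ P 58 1" "~ P 54 2 | ~ P 58 2" "~ P 54 3 | ~ P 58 3" "~ P 54 4 | ~ P 58 4" "~ P 55 1 | ~ P 56 1" "~ P 55 2 | ~ P 56 2" "~ P 55 3 | ~ P 56 3" "~ P 55 4 | ~ P 56 4" "~ P 56 1 | ~ P 57 1" "~ P 56 2 | ~ P 57 2" "~ P 56 3 | ~ P 57 3" "~ P 56 4 | ~ P 57 4" "~ P 57 1 | ~ P 58 1" "~ P 57 2 | ~ P 58 2" "~ P 57 3 | ~ P 58 3" "~ P 57 4 | ~ P 58 4"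
  shows False
  using assms by sat

lemma L4f: fixes f :: "nat \<Rightarrow> nat"
  assumes D: "\<And>v. 1 \<le> v \<Longrightarrow> v \<le> 58 \<Longrightarrow> f v = 1 \<or> f v = 2 \<or> f v = 3 \<or> f v = 4"
  and E: "\<And>a b x. 1 \<le> a \<Longrightarrow> a < b \<Longrightarrow> b \<le> 58 \<Longrightarrow> (0::nat) < x \<Longrightarrow> b - a = x^2 \<Longrightarrow> f a \<noteq> f b"
  shows False
proof -
  have d1: "f 1 = 1 \<or> f 1 = 2 \<or> f 1 = 3 \<or> f 1 = 4" using D[of 1] by simp
  have d2: "f 2 = 1 \<or> f 2 = 2 \<or> f 2 = 3 \<or> f 2 = 4" using D[of 2] by simp
  have d3: "f 3 = 1 \<or> f 3 = 2 \<or> f 3 = 3 \<or> f 3 = 4" using D[of 3] by simp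
  have d4: "f 4 = 1 \<or> f 4 = 2 \<or> f 4 = 3 \<or> f 4 = 4" using D[of 4] by simp
  have d5: "f 5 = 1 \<or> f 5 = 2 \<or> f 5 = 3 \<or> f 5 = 4" using D[of 5] by simp
  have d6: "f 6 = 1 \<or> f 6 = 2 \<or> f 6 = 3 \<or> f 6 = 4" using D[of 6] by simp
  have d7: "f 7 = 1 \<or> f 7 = 2 \<or> f 7 = 3 \<or> f 7 = 4" using D[of 7] by simp
  have d8: "f 8 = 1 \<or> f 8 = 2 \<or> f 8 = 3 \<or> f 8 = 4" using D[of 8] by simp
  have d9: "f 9 = 1 \<or> f 9 = 2 \<or> f 9 = 3 \<or> f 9 = 4" using D[of 9] by simp
  have d10: "f 10 = 1 \<or> f 10 = 2 \<or> f 10 = 3 \<or> f 10 = 4" using D[of 10] by simp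
  have d11: "f 11 = 1 \<or> f 11 = 2 \<or> f 11 = 3 \<or> f 11 = 4" using D[of 11] by simp
  have d12: "f 12 = 1 \<or> f 12 = 2 \<or> f 12 = 3 \<or> f 12 = 4" using D[of 12] by simp
  have d13: "f 13 = 1 \<or> f 13 = 2 \<or> f 13 = 3 \<or> f 13 = 4" using D[of 13] by simp
  have d14: "f 14 = 1 \<or> f 14 = 2 \<or> f 14 = 3 \<or> f 14 = 4" using D[of 14] by simp
  have d15: "f 15 = 1 \<or> f 15 = 2 \<or> f 15 = 3 \<or> f 15 = 4" using D[of 15] by simp
  have d16: "f 16 = 1 \<or> f 16 = 2 \<or> f 16 = 3 \<or> f 16 = 4" using D[of 16] by simp
  have d17: "f 17 = 1 \<or> f 17 = 2 \<or> f 17 = 3 \<or> f 17 = 4" using D[of 17] by simp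
  have d18: "f 18 = 1 \<or> f 18 = 2 \<or> f 18 = 3 \<or> f 18 = 4" using D[of 18] by simp
  have d19: "f 19 = 1 \<or> f 19 = 2 \<or> f 19 = 3 \<or> f 19 = 4" using D[of 19] by simp
  have d20: "f 20 = 1 \<or> f 20 = 2 \<or> f 20 = 3 \<or> f 20 = 4" using D[of 20] by simp
  have d21: "f 21 = 1 \<or> f 21 = 2 \<or> f 21 = 3 \<or> f 21 = 4" using D[of 21] by simp
  have d22: "f 22 = 1 \<or> f 22 = 2 \<or> f 22 = 3 \<or> f 22 = 4" using D[of 22] by simp
  have d23: "f 23 = 1 \<or> f 23 = 2 \<or> f 23 = 3 \<or> f 23 = 4" using D[of 23] by simp
  have d24: "f 24 = 1 \<or> f 24 = 2 \<or> f 24 = 3 \<or> f 24 = 4" using D[of 24] by simp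
  have d25: "f 25 = 1 \<or> f 25 = 2 \<or> f 25 = 3 \<or> f 25 = 4" using D[of 25] by simp
  have d26: "f 26 = 1 \<or> f 26 = 2 \<or> f 26 = 3 \<or> f 26 = 4" using D[of 26] by simp
  have d27: "f 27 = 1 \<or> f 27 = 2 \<or> f 27 = 3 \<or> f 27 = 4" using D[of 27] by simp
  have d28: "f 28 = 1 \<or> f 28 = 2 \<or> f 28 = 3 \<or> f 28 = 4" using D[of 28] by simp
  have d29: "f 29 = 1 \<or> f 29 = 2 \<or> f 29 = 3 \<or> f 29 = 4" using D[of 29] by simp
  have d30: "f 30 = 1 \<or> f 30 = 2 \<or> f 30 = 3 \<or> f 30 = 4" using D[of 30] by simp
  have d31: "f 31 = 1 \<or> f 31 = 2 \<or> f 31 = 3 \<or> f 31 = 4" using D[of 31] by simp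
  have d32: "f 32 = 1 \<or> f 32 = 2 \<or> f 32 = 3 \<or> f 32 = 4" using D[of 32] by simp
  have d33: "f 33 = 1 \<or> f 33 = 2 \<or> f 33 = 3 \<or> f 33 = 4" using D[of 33] by simp
  have d34: "f 34 = 1 \<or> f 34 = 2 \<or> f 34 = 3 \<or> f 34 = 4" using D[of 34] by simp
  have d35: "f 35 = 1 \<or> f 35 = 2 \<or> f 35 = 3 \<or> f 35 = 4" using D[of 35] by simp
  have d36: "f 36 = 1 \<or> f 36 = 2 \<or> f 36 = 3 \<or> f 36 = 4" using D[of 36] by simp
  have d37: "f 37 = 1 \<or> f 37 = 2 \<or> f 37 = 3 \<or> f 37 = 4" using D[of 37] by simp
  have d38: "f 38 = 1 \<or> f 38 = 2 \<or> f 38 = 3 \<or> f 38 = 4" using D[of 38] by simp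
  have d39: "f 39 = 1 \<or> f 39 = 2 \<or> f 39 = 3 \<or> f 39 = 4" using D[of 39] by simp
  have d40: "f 40 = 1 \<or> f 40 = 2 \<or> f 40 = 3 \<or> f 40 = 4" using D[of 40] by simp
  have d41: "f 41 = 1 \<or> f 41 = 2 \<or> f 41 = 3 \<or> f 41 = 4" using D[of 41] by simp
  have d42: "f 42 = 1 \<or> f 42 = 2 \<or> f 42 = 3 \<or> f 42 = 4" using D[of 42] by simp
  have d43: "f 43 = 1 \<or> f 43 = 2 \<or> f 43 = 3 \<or> f 43 = 4" using D[of 43] by simp
  have d44: "f 44 = 1 \<or> f 44 = 2 \<or> f 44 = 3 \<or> f 44 = 4" using D[of 44] by simp
  have d45: "f 45 = 1 \<or> f 45 = 2 \<or> f 45 = 3 \<or> f 45 = 4" using D[of 45] by simp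
  have d46: "f 46 = 1 \<or> f 46 = 2 \<or> f 46 = 3 \<or> f 46 = 4" using D[of 46] by simp
  have d47: "f 47 = 1 \<or> f 47 = 2 \<or> f 47 = 3 \<or> f 47 = 4" using D[of 47] by simp
  have d48: "f 48 = 1 \<or> f 48 = 2 \<or> f 48 = 3 \<or> f 48 = 4" using D[of 48] by simp
  have d49: "f 49 = 1 \<or> f 49 = 2 \<or> f 49 = 3 \<or> f 49 = 4" using D[of 49] by simp
  have d50: "f 50 = 1 \<or> f 50 = 2 \<or> f 50 = 3 \<or> f 50 = 4" using D[of 50] by simp
  have d51: "f 51 = 1 \<or> f 51 = 2 \<or> f 51 = 3 \<or> f 51 = 4" using D[of 51] by simp
  have d52: "f 52 = 1 \<or> f 52 = 2 \<or> f 52 = 3 \<or> f 52 = 4" using D[of 52] by simp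
  have d53: "f 53 = 1 \<or> f 53 = 2 \<or> f 53 = 3 \<or> f 53 = 4" using D[of 53] by simp
  have d54: "f 54 = 1 \<or> f 54 = 2 \<or> f 54 = 3 \<or> f 54 = 4" using D[of 54] by simp
  have d55: "f 55 = 1 \<or> f 55 = 2 \<or> f 55 = 3 \<or> f 55 = 4" using D[of 55] by simp
  have d56: "f 56 = 1 \<or> f 56 = 2 \<or> f 56 = 3 \<or> f 56 = 4" using D[of 56] by simp
  have d57: "f 57 = 1 \<or> f 57 = 2 \<or> f 57 = 3 \<or> f 57 = 4" using D[of 57] by simp
  have d58: "f 58 = 1 \<or> f 58 = 2 \<or> f 58 = 3 \<or> f 58 = 4" using D[of 58] by simp
  have e1_2: "f 1 \<noteq> f 2" using E[of 1 2 1] by simp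
  have e1_5: "f 1 \<noteq> f 5" using E[of 1 5 2] by simp
  have e1_10: "f 1 \<noteq> f 10" using E[of 1 10 3] by simp
  have e1_17: "f 1 \<noteq> f 17" using E[of 1 17 4] by simp
  have e1_26: "f 1 \<noteq> f 26" using E[of 1 26 5] by simp
  have e1_37: "f 1 \<noteq> f 37" using E[of 1 37 6] by simp
  have e1_50: "f 1 \<noteq> f 50" using E[of 1 50 7] by simp
  have e2_3: "f 2 \<noteq> f 3" using E[of 2 3 1] by simp
  have e2_6: "f 2 \<noteq> f 6" using E[of 2 6 2] by simp
  have e2_11: "f 2 \<noteq> f 11" using E[of 2 11 3] by simp
  have e2_18: "f 2 \<noteq> f 18" using E[of 2 18 4] by simp
  have e2_27: "f 2 \<noteq> f 27" using E[of 2 27 5] by simp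
  have e2_38: "f 2 \<noteq> f 38" using E[of 2 38 6] by simp
  have e2_51: "f 2 \<noteq> f 51" using E[of 2 51 7] by simp
  have e3_4: "f 3 \<noteq> f 4" using E[of 3 4 1] by simp
  have e3_7: "f 3 \<noteq> f 7" using E[of 3 7 2] by simp
  have e3_12: "f 3 \<noteq> f 12" using E[of 3 12 3] by simp
  have e3_19: "f 3 \<noteq> f 19" using E[of 3 19 4] by simp
  have e3_28: "f 3 \<noteq> f 28" using E[of 3 28 5] by simp
  have e3_39: "f 3 \<noteq> f 39" using E[of 3 39 6] by simp
  have e3_52: "f 3 \<noteq> f 52" using E[of 3 52 7] by simp
  have e4_5: "f 4 \<noteq> f 5" using E[of 4 5 1] by simp
  have e4_8: "f 4 \<noteq> f 8" using E[of 4 8 2] by simp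
  have e4_13: "f 4 \<noteq> f 13" using E[of 4 13 3] by simp
  have e4_20: "f 4 \<noteq> f 20" using E[of 4 20 4] by simp
  have e4_29: "f 4 \<noteq> f 29" using E[of 4 29 5] by simp
  have e4_40: "f 4 \<noteq> f 40" using E[of 4 40 6] by simp
  have e4_53: "f 4 \<noteq> f 53" using E[of 4 53 7] by simp
  have e5_6: "f 5 \<noteq> f 6" using E[of 5 6 1] by simp
  have e5_9: "f 5 \<noteq> f 9" using E[of 5 9 2] by simp
  have e5_14: "f 5 \<noteq> f 14" using E[of 5 14 3] by simp
  have e5_21: "f 5 \<noteq> f 21" using E[of 5 21 4] by simp
  have e5_30: "f 5 \<noteq> f 30" using E[of 5 30 5] by simp
  have e5_41: "f 5 \<noteq> f 41" using E[of 5 41 6] by simp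
  have e5_54: "f 5 \<noteq> f 54" using E[of 5 54 7] by simp
  have e6_7: "f 6 \<noteq> f 7" using E[of 6 7 1] by simp
  have e6_10: "f 6 \<noteq> f 10" using E[of 6 10 2] by simp
  have e6_15: "f 6 \<noteq> f 15" using E[of 6 15 3] by simp
  have e6_22: "f 6 \<noteq> f 22" using E[of 6 22 4] by simp
  have e6_31: "f 6 \<noteq> f 31" using E[of 6 31 5] by simp
  have e6_42: "f 6 \<noteq> f 42" using E[of 6 42 6] by simp
  have e6_55: "f 6 \<noteq> f 55" using E[of 6 55 7] by simp
  have e7_8: "f 7 \<noteq> f 8" using E[of 7 8 1] by simp
  have e7_11: "f 7 \<noteq> f 11" using E[of 7 11 2] by simp
  have e7_16: "f 7 \<noteq> f 16" using E[of 7 16 3] by simp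
  have e7_23: "f 7 \<noteq> f 23" using E[of 7 23 4] by simp
  have e7_32: "f 7 \<noteq> f 32" using E[of 7 32 5] by simp
  have e7_43: "f 7 \<noteq> f 43" using E[of 7 43 6] by simp
  have e7_56: "f 7 \<noteq> f 56" using E[of 7 56 7] by simp
  have e8_9: "f 8 \<noteq> f 9" using E[of 8 9 1] by simp
  have e8_12: "f 8 \<noteq> f 12" using E[of 8 12 2] by simp
  have e8_17: "f 8 \<noteq> f 17" using E[of 8 17 3] by simp
  have e8_24: "f 8 \<noteq> f 24" using E[of 8 24 4] by simp
  have e8_33: "f 8 \<noteq> f 33" using E[of 8 33 5] by simp
  have e8_44: "f 8 \<noteq> f 44" using E[of 8 44 6] by simp
  have e8_57: "f 8 \<noteq> f 57" using E[of 8 57 7] by simp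
  have e9_10: "f 9 \<noteq> f 10" using E[of 9 10 1] by simp
  have e9_13: "f 9 \<noteq> f 13" using E[of 9 13 2] by simp
  have e9_18: "f 9 \<noteq> f 18" using E[of 9 18 3] by simp
  have e9_25: "f 9 \<noteq> f 25" using E[of 9 25 4] by simp
  have e9_34: "f 9 \<noteq> f 34" using E[of 9 34 5] by simp
  have e9_45: "f 9 \<noteq> f 45" using E[of 9 45 6] by simp
  have e9_58: "f 9 \<noteq> f 58" using E[of 9 58 7] by simp
  have e10_11: "f 10 \<noteq> f 11" using E[of 10 11 1] by simp
  have e10_14: "f 10 \<noteq> f 14" using E[of 10 14 2] by simp
  have e10_19: "f 10 \<noteq> f 19" using E[of 10 19 3] by simp
  have e10_26: "f 10 \<noteq> f 26" using E[of 10 26 4] by simp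
  have e10_35: "f 10 \<noteq> f 35" using E[of 10 35 5] by simp
  have e10_46: "f 10 \<noteq> f 46" using E[of 10 46 6] by simp
  have e11_12: "f 11 \<noteq> f 12" using E[of 11 12 1] by simp
  have e11_15: "f 11 \<noteq> f 15" using E[of 11 15 2] by simp
  have e11_20: "f 11 \<noteq> f 20" using E[of 11 20 3] by simp
  have e11_27: "f 11 \<noteq> f 27" using E[of 11 27 4] by simp
  have e11_36: "f 11 \<noteq> f 36" using E[of 11 36 5] by simp
  have e11_47: "f 11 \<noteq> f 47" using E[of 11 47 6] by simp
  have e12_13: "f 12 \<noteq> f 13" using E[of 12 13 1] by simp
  have e12_16: "f 12 \<noteq> f 16" using E[of 12 16 2] by simp
  have e12_21: "f 12 \<noteq> f 21" using E[of 12 21 3] by simp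
  have e12_28: "f 12 \<noteq> f 28" using E[of 12 28 4] by simp
  have e12_37: "f 12 \<noteq> f 37" using E[of 12 37 5] by simp
  have e12_48: "f 12 \<noteq> f 48" using E[of 12 48 6] by simp
  have e13_14: "f 13 \<noteq> f 14" using E[of 13 14 1] by simp
  have e13_17: "f 13 \<noteq> f 17" using E[of 13 17 2] by simp
  have e13_22: "f 13 \<noteq> f 22" using E[of 13 22 3] by simp
  have e13_29: "f 13 \<noteq> f 29" using E[of 13 29 4] by simp
  have e13_38: "f 13 \<noteq> f 38" using E[of 13 38 5] by simp
  have e13_49: "f 13 \<noteq> f 49" using E[of 13 49 6] by simp
  have e14_15: "f 14 \<noteq> f 15" using E[of 14 15 1] by simp
  have e14_18: "f 14 \<noteq> f 18" using E[of 14 18 2] by simp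
  have e14_23: "f 14 \<noteq> f 23" using E[of 14 23 3] by simp
  have e14_30: "f 14 \<noteq> f 30" using E[of 14 30 4] by simp
  have e14_39: "f 14 \<noteq> f 39" using E[of 14 39 5] by simp
  have e14_50: "f 14 \<noteq> f 50" using E[of 14 50 6] by simp
  have e15_16: "f 15 \<noteq> f 16" using E[of 15 16 1] by simp
  have e15_19: "f 15 \<noteq> f 19" using E[of 15 19 2] by simp
  have e15_24: "f 15 \<noteq> f 24" using E[of 15 24 3] by simp
  have e15_31: "f 15 \<noteq> f 31" using E[of 15 31 4] by simp
  have e15_40: "f 15 \<noteq> f 40" using E[of 15 40 5] by simp
  have e15_51: "f 15 \<noteq> f 51" using E[of 15 51 6] by simp
  have e16_17: "f 16 \<noteq> f 17" using E[of 16 17 1] by simp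
  have e16_20: "f 16 \<noteq> f 20" using E[of 16 20 2] by simp
  have e16_25: "f 16 \<noteq> f 25" using E[of 16 25 3] by simp
  have e16_32: "f 16 \<noteq> f 32" using E[of 16 32 4] by simp
  have e16_41: "f 16 \<noteq> f 41" using E[of 16 41 5] by simp
  have e16_52: "f 16 \<noteq> f 52" using E[of 16 52 6] by simp
  have e17_18: "f 17 \<noteq> f 18" using E[of 17 18 1] by simp
  have e17_21: "f 17 \<noteq> f 21" using E[of 17 21 2] by simp
  have e17_26: "f 17 \<noteq> f 26" using E[of 17 26 3] by simp
  have e17_33: "f 17 \<noteq> f 33" using E[of 17 33 4] by simp
  have e17_42: "f 17 \<noteq> f 42" using E[of 17 42 5] by simp
  have e17_53: "f 17 \<noteq> f 53" using E[of 17 53 6] by simp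
  have e18_19: "f 18 \<noteq> f 19" using E[of 18 19 1] by simp
  have e18_22: "f 18 \<noteq> f 22" using E[of 18 22 2] by simp
  have e18_27: "f 18 \<noteq> f 27" using E[of 18 27 3] by simp
  have e18_34: "f 18 \<noteq> f 34" using E[of 18 34 4] by simp
  have e18_43: "f 18 \<noteq> f 43" using E[of 18 43 5] by simp
  have e18_54: "f 18 \<noteq> f 54" using E[of 18 54 6] by simp
  have e19_20: "f 19 \<noteq> f 20" using E[of 19 20 1] by simp
  have e19_23: "f 19 \<noteq> f 23" using E[of 19 23 2] by simp
  have e19_28: "f 19 \<noteq> f 28" using E[of 19 28 3] by simp
  have e19_35: "f 19 \<noteq> f 35" using E[of 19 35 4] by simp
  have e19_44: "f 19 \<noteq> f 44" using E[of 19 44 5] by simp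
  have e19_55: "f 19 \<noteq> f 55" using E[of 19 55 6] by simp
  have e20_21: "f 20 \<noteq> f 21" using E[of 20 21 1] by simp
  have e20_24: "f 20 \<noteq> f 24" using E[of 20 24 2] by simp
  have e20_29: "f 20 \<noteq> f 29" using E[of 20 29 3] by simp
  have e20_36: "f 20 \<noteq> f 36" using E[of 20 36 4] by simp
  have e20_45: "f 20 \<noteq> f 45" using E[of 20 45 5] by simp
  have e20_56: "f 20 \<noteq> f 56" using E[of 20 56 6] by simp
  have e21_22: "f 21 \<noteq> f 22" using E[of 21 22 1] by simp
  have e21_25: "f 21 \<noteq> f 25" using E[of 21 25 2] by simp
  have e21_30: "f 21 \<noteq> f 30" using E[of 21 30 3] by simp
  have e21_37: "f 21 \<noteq> f 37" using E[of 21 37 4] by simp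
  have e21_46: "f 21 \<noteq> f 46" using E[of 21 46 5] by simp
  have e21_57: "f 21 \<noteq> f 57" using E[of 21 57 6] by simp
  have e22_23: "f 22 \<noteq> f 23" using E[of 22 23 1] by simp
  have e22_26: "f 22 \<noteq> f 26" using E[of 22 26 2] by simp
  have e22_31: "f 22 \<noteq> f 31" using E[of 22 31 3] by simp
  have e22_38: "f 22 \<noteq> f 38" using E[of 22 38 4] by simp
  have e22_47: "f 22 \<noteq> f 47" using E[of 22 47 5] by simp
  have e22_58: "f 22 \<noteq> f 58" using E[of 22 58 6] by simp
  have e23_24: "f 23 \<noteq> f 24" using E[of 23 24 1] by simp
  have e23_27: "f 23 \<noteq> f 27" using E[of 23 27 2] by simp
  have e23_32: "f 23 \<noteq> f 32" using E[of 23 32 3] by simp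
  have e23_39: "f 23 \<noteq> f 39" using E[of 23 39 4] by simp
  have e23_48: "f 23 \<noteq> f 48" using E[of 23 48 5] by simp
  have e24_25: "f 24 \<noteq> f 25" using E[of 24 25 1] by simp
  have e24_28: "f 24 \<noteq> f 28" using E[of 24 28 2] by simp
  have e24_33: "f 24 \<noteq> f 33" using E[of 24 33 3] by simp
  have e24_40: "f 24 \<noteq> f 40" using E[of 24 40 4] by simp
  have e24_49: "f 24 \<noteq> f 49" using E[of 24 49 5] by simp
  have e25_26: "f 25 \<noteq> f 26" using E[of 25 26 1] by simp
  have e25_29: "f 25 \<noteq> f 29" using E[of 25 29 2] by simp
  have e25_34: "f 25 \<noteq> f 34" using E[of 25 34 3] by simp
  have e25_41: "f 25 \<noteq> f 41" using E[of 25 41 4] by simp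
  have e25_50: "f 25 \<noteq> f 50" using E[of 25 50 5] by simp
  have e26_27: "f 26 \<noteq> f 27" using E[of 26 27 1] by simp
  have e26_30: "f 26 \<noteq> f 30" using E[of 26 30 2] by simp
  have e26_35: "f 26 \<noteq> f 35" using E[of 26 35 3] by simp
  have e26_42: "f 26 \<noteq> f 42" using E[of 26 42 4] by simp
  have e26_51: "f 26 \<noteq> f 51" using E[of 26 51 5] by simp
  have e27_28: "f 27 \<noteq> f 28" using E[of 27 28 1] by simp
  have e27_31: "f 27 \<noteq> f 31" using E[of 27 31 2] by simp
  have e27_36: "f 27 \<noteq> f 36" using E[of 27 36 3] by simp
  have e27_43: "f 27 \<noteq> f 43" using E[of 27 43 4] by simp
  have e27_52: "f 27 \<noteq> f 52" using E[of 27 52 5] by simp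
  have e28_29: "f 28 \<noteq> f 29" using E[of 28 29 1] by simp
  have e28_32: "f 28 \<noteq> f 32" using E[of 28 32 2] by simp
  have e28_37: "f 28 \<noteq> f 37" using E[of 28 37 3] by simp
  have e28_44: "f 28 \<noteq> f 44" using E[of 28 44 4] by simp
  have e28_53: "f 28 \<noteq> f 53" using E[of 28 53 5] by simp
  have e29_30: "f 29 \<noteq> f 30" using E[of 29 30 1] by simp
  have e29_33: "f 29 \<noteq> f 33" using E[of 29 33 2] by simp
  have e29_38: "f 29 \<noteq> f 38" using E[of 29 38 3] by simp
  have e29_45: "f 29 \<noteq> f 45" using E[of 29 45 4] by simp
  have e29_54: "f 29 \<noteq> f 54" using E[of 29 54 5] by simp
  have e30_31: "f 30 \<noteq> f 31" using E[of 30 31 1] by simp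
  have e30_34: "f 30 \<noteq> f 34" using E[of 30 34 2] by simp
  have e30_39: "f 30 \<noteq> f 39" using E[of 30 39 3] by simp
  have e30_46: "f 30 \<noteq> f 46" using E[of 30 46 4] by simp
  have e30_55: "f 30 \<noteq> f 55" using E[of 30 55 5] by simp
  have e31_32: "f 31 \<noteq> f 32" using E[of 31 32 1] by simp
  have e31_35: "f 31 \<noteq> f 35" using E[of 31 35 2] by simp
  have e31_40: "f 31 \<noteq> f 40" using E[of 31 40 3] by simp
  have e31_47: "f 31 \<noteq> f 47" using E[of 31 47 4] by simp
  have e31_56: "f 31 \<noteq> f 56" using E[of 31 56 5] by simp
  have e32_33: "f 32 \<noteq> f 33" using E[of 32 33 1] by simp
  have e32_36: "f 32 \<noteq> f 36" using E[of 32 36 2] by simp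
  have e32_41: "f 32 \<noteq> f 41" using E[of 32 41 3] by simp
  have e32_48: "f 32 \<noteq> f 48" using E[of 32 48 4] by simp
  have e32_57: "f 32 \<noteq> f 57" using E[of 32 57 5] by simp
  have e33_34: "f 33 \<noteq> f 34" using E[of 33 34 1] by simp
  have e33_37: "f 33 \<noteq> f 37" using E[of 33 37 2] by simp
  have e33_42: "f 33 \<noteq> f 42" using E[of 33 42 3] by simp
  have e33_49: "f 33 \<noteq> f 49" using E[of 33 49 4] by simp
  have e33_58: "f 33 \<noteq> f 58" using E[of 33 58 5] by simp
  have e34_35: "f 34 \<noteq> f 35" using E[of 34 35 1] by simp
  have e34_38: "f 34 \<noteq> f 38" using E[of 34 38 2] by simp
  have e34_43: "f 34 \<noteq> f 43" using E[of 34 43 3] by simp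
  have e34_50: "f 34 \<noteq> f 50" using E[of 34 50 4] by simp
  have e35_36: "f 35 \<noteq> f 36" using E[of 35 36 1] by simp
  have e35_39: "f 35 \<noteq> f 39" using E[of 35 39 2] by simp
  have e35_44: "f 35 \<noteq> f 44" using E[of 35 44 3] by simp
  have e35_51: "f 35 \<noteq> f 51" using E[of 35 51 4] by simp
  have e36_37: "f 36 \<noteq> f 37" using E[of 36 37 1] by simp
  have e36_40: "f 36 \<noteq> f 40" using E[of 36 40 2] by simp
  have e36_45: "f 36 \<noteq> f 45" using E[of 36 45 3] by simp
  have e36_52: "f 36 \<noteq> f 52" using E[of 36 52 4] by simp
  have e37_38: "f 37 \<noteq> f 38" using E[of 37 38 1] by simp
  have e37_41: "f 37 \<noteq> f 41" using E[of 37 41 2] by simp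
  have e37_46: "f 37 \<noteq> f 46" using E[of 37 46 3] by simp
  have e37_53: "f 37 \<noteq> f 53" using E[of 37 53 4] by simp
  have e38_39: "f 38 \<noteq> f 39" using E[of 38 39 1] by simp
  have e38_42: "f 38 \<noteq> f 42" using E[of 38 42 2] by simp
  have e38_47: "f 38 \<noteq> f 47" using E[of 38 47 3] by simp
  have e38_54: "f 38 \<noteq> f 54" using E[of 38 54 4] by simp
  have e39_40: "f 39 \<noteq> f 40" using E[of 39 40 1] by simp
  have e39_43: "f 39 \<noteq> f 43" using E[of 39 43 2] by simp
  have e39_48: "f 39 \<noteq> f 48" using E[of 39 48 3] by simp
  have e39_55: "f 39 \<noteq> f 55" using E[of 39 55 4] by simp
  have e40_41: "f 40 \<noteq> f 41" using E[of 40 41 1] by simp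
  have e40_44: "f 40 \<noteq> f 44" using E[of 40 44 2] by simp
  have e40_49: "f 40 \<noteq> f 49" using E[of 40 49 3] by simp
  have e40_56: "f 40 \<noteq> f 56" using E[of 40 56 4] by simp
  have e41_42: "f 41 \<noteq> f 42" using E[of 41 42 1] by simp
  have e41_45: "f 41 \<noteq> f 45" using E[of 41 45 2] by simp
  have e41_50: "f 41 \<noteq> f 50" using E[of 41 50 3] by simp
  have e41_57: "f 41 \<noteq> f 57" using E[of 41 57 4] by simp
  have e42_43: "f 42 \<noteq> f 43" using E[of 42 43 1] by simp
  have e42_46: "f 42 \<noteq> f 46" using E[of 42 46 2] by simp
  have e42_51: "f 42 \<noteq> f 51" using E[of 42 51 3] by simp
  have e42_58: "f 42 \<noteq> f 58" using E[of 42 58 4] by simp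
  have e43_44: "f 43 \<noteq> f 44" using E[of 43 44 1] by simp
  have e43_47: "f 43 \<noteq> f 47" using E[of 43 47 2] by simp
  have e43_52: "f 43 \<noteq> f 52" using E[of 43 52 3] by simp
  have e44_45: "f 44 \<noteq> f 45" using E[of 44 45 1] by simp
  have e44_48: "f 44 \<noteq> f 48" using E[of 44 48 2] by simp
  have e44_53: "f 44 \<noteq> f 53" using E[of 44 53 3] by simp
  have e45_46: "f 45 \<noteq> f 46" using E[of 45 46 1] by simp
  have e45_49: "f 45 \<noteq> f 49" using E[of 45 49 2] by simp
  have e45_54: "f 45 \<noteq> f 54" using E[of 45 54 3] by simp
  have e46_47: "f 46 \<noteq> f 47" using E[of 46 47 1] by simp
  have e46_50: "f 46 \<noteq> f 50" using E[of 46 50 2] by simp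
  have e46_55: "f 46 \<noteq> f 55" using E[of 46 55 3] by simp
  have e47_48: "f 47 \<noteq> f 48" using E[of 47 48 1] by simp
  have e47_51: "f 47 \<noteq> f 51" using E[of 47 51 2] by simp
  have e47_56: "f 47 \<noteq> f 56" using E[of 47 56 3] by simp
  have e48_49: "f 48 \<noteq> f 49" using E[of 48 49 1] by simp
  have e48_52: "f 48 \<noteq> f 52" using E[of 48 52 2] by simp
  have e48_57: "f 48 \<noteq> f 57" using E[of 48 57 3] by simp
  have e49_50: "f 49 \<noteq> f 50" using E[of 49 50 1] by simp
  have e49_53: "f 49 \<noteq> f 53" using E[of 49 53 2] by simp
  have e49_58: "f 49 \<noteq> f 58" using E[of 49 58 3] by simp
  have e50_51: "f 50 \<noteq> f 51" using E[of 50 51 1] by simp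
  have e50_54: "f 50 \<noteq> f 54" using E[of 50 54 2] by simp
  have e51_52: "f 51 \<noteq> f 52" using E[of 51 52 1] by simp
  have e51_55: "f 51 \<noteq> f 55" using E[of 51 55 2] by simp
  have e52_53: "f 52 \<noteq> f 53" using E[of 52 53 1] by simp
  have e52_56: "f 52 \<noteq> f 56" using E[of 52 56 2] by simp
  have e53_54: "f 53 \<noteq> f 54" using E[of 53 54 1] by simp
  have e53_57: "f 53 \<noteq> f 57" using E[of 53 57 2] by simp
  have e54_55: "f 54 \<noteq> f 55" using E[of 54 55 1] by simp
  have e54_58: "f 54 \<noteq> f 58" using E[of 54 58 2] by simp
  have e55_56: "f 55 \<noteq> f 56" using E[of 55 56 1] by simp
  have e56_57: "f 56 \<noteq> f 57" using E[of 56 57 1] by simp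
  have e57_58: "f 57 \<noteq> f 58" using E[of 57 58 1] by simp
  show False by (rule L4[where P="\<lambda>v c. f v = c", OF d1 d2 d3 d4 d5 d6 d7 d8 d9 d10 d11 d12 d13 d14 d15 d16 d17 d18 d19 d20 d21 d22 d23 d24 d25 d26 d27 d28 d29 d30 d31 d32 d33 d34 d35 d36 d37 d38 d39 d40 d41 d42 d43 d44 d45 d46 d47 d48 d49 d50 d51 d52 d53 d54 d55 d56 d57 d58 ncl[of f 1 2 1, OF e1_2] ncl[of f 1 2 2, OF e1_2] ncl[of f 1 2 3, OF e1_2] ncl[of f 1 2 4, OF e1_2] ncl[of f 1 5 1, OF e1_5] ncl[of f 1 5 2, OF e1_5] ncl[of f 1 5 3, OF e1_5] ncl[of f 1 5 4, OF e1_5] ncl[of f 1 10 1, OF e1_10] ncl[of f 1 10 2, OF e1_10] ncl[of f 1 10 3, OF e1_10] ncl[of f 1 10 4, OF e1_10] ncl[of f 1 17 1, OF e1_17] ncl[of f 1 17 2, OF e1_17] ncl[of f 1 17 3, OF e1_17] ncl[of f 1 17 4, OF e1_17] ncl[of f 1 26 1, OF e1_26] ncl[of f 1 26 2, OF e1_26] ncl[of f 1 26 3, OF e1_26] ncl[of f 1 26 4, OF e1_26] ncl[of f 1 37 1, OF e1_37] ncl[of f 1 37 2, OF e1_37] ncl[of f 1 37 3, OF e1_37] ncl[of f 1 37 4, OF e1_37] ncl[of f 1 50 1, OF e1_50] ncl[of f 1 50 2, OF e1_50] ncl[of f 1 50 3, OF e1_50] ncl[of f 1 50 4, OF e1_50]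 ncl[of f 2 3 1, OF e2_3] ncl[of f 2 3 2, OF e2_3] ncl[of f 2 3 3, OF e2_3] ncl[of f 2 3 4, OF e2_3] ncl[of f 2 6 1, OF e2_6] ncl[of f 2 6 2, OF e2_6] ncl[of f 2 6 3, OF e2_6] ncl[of f 2 6 4, OF e2_6] ncl[of f 2 11 1, OF e2_11] ncl[of f 2 11 2, OF e2_11] ncl[of f 2 11 3, OF e2_11] ncl[of f 2 11 4, OF e2_11] ncl[of f 2 18 1, OF e2_18] ncl[of f 2 18 2, OF e2_18] ncl[of f 2 18 3, OF e2_18] ncl[of f 2 18 4, OF e2_18] ncl[of f 2 27 1, OF e2_27] ncl[of f 2 27 2, OF e2_27] ncl[of f 2 27 3, OF e2_27] ncl[of f 2 27 4, OF e2_27] ncl[of f 2 38 1, OF e2_38] ncl[of f 2 38 2, OF e2_38] ncl[of f 2 38 3, OF e2_38] ncl[of f 2 38 4, OF e2_38] ncl[of f 2 51 1, OF e2_51] ncl[of f 2 51 2, OF e2_51] ncl[of f 2 51 3, OF e2_51] ncl[of f 2 51 4, OF e2_51] ncl[of f 3 4 1, OF e3_4] ncl[of f 3 4 2, OF e3_4] ncl[of f 3 4 3, OF e3_4] ncl[of f 3 4 4, OF e3_4] ncl[of f 3 7 1, OF e3_7] ncl[of f 3 7 2, OF e3_7] ncl[of f 3 7 3, OF e3_7] ncl[of f 3 7 4, OF e3_7] ncl[of f 3 12 1, OF e3_12] ncl[of f 3 12 2, OF e3_12] ncl[of f 3 12 3, OF e3_12] ncl[of f 3 12 4, OF e3_12]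 ncl[of f 3 19 1, OF e3_19] ncl[of f 3 19 2, OF e3_19] ncl[of f 3 19 3, OF e3_19] ncl[of f 3 19 4, OF e3_19] ncl[of f 3 28 1, OF e3_28] ncl[of f 3 28 2, OF e3_28] ncl[of f 3 28 3, OF e3_28] ncl[of f 3 28 4, OF e3_28] ncl[of f 3 39 1, OF e3_39] ncl[of f 3 39 2, OF e3_39] ncl[of f 3 39 3, OF e3_39] ncl[of f 3 39 4, OF e3_39] ncl[of f 3 52 1, OF e3_52] ncl[of f 3 52 2, OF e3_52] ncl[of f 3 52 3, OF e3_52] ncl[of f 3 52 4, OF e3_52] ncl[of f 4 5 1, OF e4_5] ncl[of f 4 5 2, OF e4_5] ncl[of f 4 5 3, OF e4_5] ncl[of f 4 5 4, OF e4_5] ncl[of f 4 8 1, OF e4_8] ncl[of f 4 8 2, OF e4_8] ncl[of f 4 8 3, OF e4_8] ncl[of f 4 8 4, OF e4_8] ncl[of f 4 13 1, OF e4_13] ncl[of f 4 13 2, OF e4_13] ncl[of f 4 13 3, OF e4_13] ncl[of f 4 13 4, OF e4_13] ncl[of f 4 20 1, OF e4_20] ncl[of f 4 20 2, OF e4_20] ncl[of f 4 20 3, OF e4_20] ncl[of f 4 20 4, OF e4_20] ncl[of f 4 29 1, OF e4_29] ncl[of f 4 29 2, OF e4_29] ncl[of f 4 29 3, OF e4_29] ncl[of f 4 29 4, OF e4_29] ncl[of f 4 40 1, OF e4_40] ncl[of f 4 40 2, OF e4_40] ncl[of f 4 40 3, OF e4_40] ncl[of f 4 40 4, OF e4_40]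 ncl[of f 4 53 1, OF e4_53] ncl[of f 4 53 2, OF e4_53] ncl[of f 4 53 3, OF e4_53] ncl[of f 4 53 4, OF e4_53] ncl[of f 5 6 1, OF e5_6] ncl[of f 5 6 2, OF e5_6] ncl[of f 5 6 3, OF e5_6] ncl[of f 5 6 4, OF e5_6] ncl[of f 5 9 1, OF e5_9] ncl[of f 5 9 2, OF e5_9] ncl[of f 5 9 3, OF e5_9] ncl[of f 5 9 4, OF e5_9] ncl[of f 5 14 1, OF e5_14] ncl[of f 5 14 2, OF e5_14] ncl[of f 5 14 3, OF e5_14] ncl[of f 5 14 4, OF e5_14] ncl[of f 5 21 1, OF e5_21] ncl[of f 5 21 2, OF e5_21] ncl[of f 5 21 3, OF e5_21] ncl[of f 5 21 4, OF e5_21] ncl[of f 5 30 1, OF e5_30] ncl[of f 5 30 2, OF e5_30] ncl[of f 5 30 3, OF e5_30] ncl[of f 5 30 4, OF e5_30] ncl[of f 5 41 1, OF e5_41] ncl[of f 5 41 2, OF e5_41] ncl[of f 5 41 3, OF e5_41] ncl[of f 5 41 4, OF e5_41] ncl[of f 5 54 1, OF e5_54] ncl[of f 5 54 2, OF e5_54] ncl[of f 5 54 3, OF e5_54] ncl[of f 5 54 4, OF e5_54] ncl[of f 6 7 1, OF e6_7] ncl[of f 6 7 2, OF e6_7] ncl[of f 6 7 3, OF e6_7] ncl[of f 6 7 4, OF e6_7] ncl[of f 6 10 1, OF e6_10] ncl[of f 6 10 2, OF e6_10] ncl[of f 6 10 3, OF e6_10] ncl[of f 6 10 4, OF e6_10]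 ncl[of f 6 15 1, OF e6_15] ncl[of f 6 15 2, OF e6_15] ncl[of f 6 15 3, OF e6_15] ncl[of f 6 15 4, OF e6_15] ncl[of f 6 22 1, OF e6_22] ncl[of f 6 22 2, OF e6_22] ncl[of f 6 22 3, OF e6_22] ncl[of f 6 22 4, OF e6_22] ncl[of f 6 31 1, OF e6_31] ncl[of f 6 31 2, OF e6_31] ncl[of f 6 31 3, OF e6_31] ncl[of f 6 31 4, OF e6_31] ncl[of f 6 42 1, OF e6_42] ncl[of f 6 42 2, OF e6_42] ncl[of f 6 42 3, OF e6_42] ncl[of f 6 42 4, OF e6_42] ncl[of f 6 55 1, OF e6_55] ncl[of f 6 55 2, OF e6_55] ncl[of f 6 55 3, OF e6_55] ncl[of f 6 55 4, OF e6_55] ncl[of f 7 8 1, OF e7_8] ncl[of f 7 8 2, OF e7_8] ncl[of f 7 8 3, OF e7_8] ncl[of f 7 8 4, OF e7_8] ncl[of f 7 11 1, OF e7_11] ncl[of f 7 11 2, OF e7_11] ncl[of f 7 11 3, OF e7_11] ncl[of f 7 11 4, OF e7_11] ncl[of f 7 16 1, OF e7_16] ncl[of f 7 16 2, OF e7_16] ncl[of f 7 16 3, OF e7_16] ncl[of f 7 16 4, OF e7_16] ncl[of f 7 23 1, OF e7_23] ncl[of f 7 23 2, OF e7_23] ncl[of f 7 23 3, OF e7_23] ncl[of f 7 23 4, OF e7_23] ncl[of f 7 32 1, OF e7_32] ncl[of f 7 32 2, OF e7_32] ncl[of f 7 32 3, OF e7_32] ncl[of f 7 32 4, OF e7_32]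 ncl[of f 7 43 1, OF e7_43] ncl[of f 7 43 2, OF e7_43] ncl[of f 7 43 3, OF e7_43] ncl[of f 7 43 4, OF e7_43] ncl[of f 7 56 1, OF e7_56] ncl[of f 7 56 2, OF e7_56] ncl[of f 7 56 3, OF e7_56] ncl[of f 7 56 4, OF e7_56] ncl[of f 8 9 1, OF e8_9] ncl[of f 8 9 2, OF e8_9] ncl[of f 8 9 3, OF e8_9] ncl[of f 8 9 4, OF e8_9] ncl[of f 8 12 1, OF e8_12] ncl[of f 8 12 2, OF e8_12] ncl[of f 8 12 3, OF e8_12] ncl[of f 8 12 4, OF e8_12] ncl[of f 8 17 1, OF e8_17] ncl[of f 8 17 2, OF e8_17] ncl[of f 8 17 3, OF e8_17] ncl[of f 8 17 4, OF e8_17] ncl[of f 8 24 1, OF e8_24] ncl[of f 8 24 2, OF e8_24] ncl[of f 8 24 3, OF e8_24] ncl[of f 8 24 4, OF e8_24] ncl[of f 8 33 1, OF e8_33] ncl[of f 8 33 2, OF e8_33] ncl[of f 8 33 3, OF e8_33] ncl[of f 8 33 4, OF e8_33] ncl[of f 8 44 1, OF e8_44] ncl[of f 8 44 2, OF e8_44] ncl[of f 8 44 3, OF e8_44] ncl[of f 8 44 4, OF e8_44] ncl[of f 8 57 1, OF e8_57] ncl[of f 8 57 2, OF e8_57] ncl[of f 8 57 3, OF e8_57] ncl[of f 8 57 4, OF e8_57] ncl[of f 9 10 1, OF e9_10] ncl[of f 9 10 2, OF e9_10] ncl[of f 9 10 3, OF e9_10] ncl[of f 9 10 4, OF e9_10]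 ncl[of f 9 13 1, OF e9_13] ncl[of f 9 13 2, OF e9_13] ncl[of f 9 13 3, OF e9_13] ncl[of f 9 13 4, OF e9_13] ncl[of f 9 18 1, OF e9_18] ncl[of f 9 18 2, OF e9_18] ncl[of f 9 18 3, OF e9_18] ncl[of f 9 18 4, OF e9_18] ncl[of f 9 25 1, OF e9_25] ncl[of f 9 25 2, OF e9_25] ncl[of f 9 25 3, OF e9_25] ncl[of f 9 25 4, OF e9_25] ncl[of f 9 34 1, OF e9_34] ncl[of f 9 34 2, OF e9_34] ncl[of f 9 34 3, OF e9_34] ncl[of f 9 34 4, OF e9_34] ncl[of f 9 45 1, OF e9_45] ncl[of f 9 45 2, OF e9_45] ncl[of f 9 45 3, OF e9_45] ncl[of f 9 45 4, OF e9_45] ncl[of f 9 58 1, OF e9_58] ncl[of f 9 58 2, OF e9_58] ncl[of f 9 58 3, OF e9_58] ncl[of f 9 58 4, OF e9_58] ncl[of f 10 11 1, OF e10_11] ncl[of f 10 11 2, OF e10_11] ncl[of f 10 11 3, OF e10_11] ncl[of f 10 11 4, OF e10_11] ncl[of f 10 14 1, OF e10_14] ncl[of f 10 14 2, OF e10_14] ncl[of f 10 14 3, OF e10_14] ncl[of f 10 14 4, OF e10_14] ncl[of f 10 19 1, OF e10_19] ncl[of f 10 19 2, OF e10_19] ncl[of f 10 19 3, OF e10_19] ncl[of f 10 19 4, OF e10_19] ncl[of f 10 26 1, OF e10_26] ncl[of f 10 26 2, OF e10_26] ncl[of f 10 26 3, OF e10_26] ncl[of f 10 26 4, OF e10_26]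 ncl[of f 10 35 1, OF e10_35] ncl[of f 10 35 2, OF e10_35] ncl[of f 10 35 3, OF e10_35] ncl[of f 10 35 4, OF e10_35] ncl[of f 10 46 1, OF e10_46] ncl[of f 10 46 2, OF e10_46] ncl[of f 10 46 3, OF e10_46] ncl[of f 10 46 4, OF e10_46] ncl[of f 11 12 1, OF e11_12] ncl[of f 11 12 2, OF e11_12] ncl[of f 11 12 3, OF e11_12] ncl[of f 11 12 4, OF e11_12] ncl[of f 11 15 1, OF e11_15] ncl[of f 11 15 2, OF e11_15] ncl[of f 11 15 3, OF e11_15] ncl[of f 11 15 4, OF e11_15] ncl[of f 11 20 1, OF e11_20] ncl[of f 11 20 2, OF e11_20] ncl[of f 11 20 3, OF e11_20] ncl[of f 11 20 4, OF e11_20] ncl[of f 11 27 1, OF e11_27] ncl[of f 11 27 2, OF e11_27] ncl[of f 11 27 3, OF e11_27] ncl[of f 11 27 4, OF e11_27] ncl[of f 11 36 1, OF e11_36] ncl[of f 11 36 2, OF e11_36] ncl[of f 11 36 3, OF e11_36] ncl[of f 11 36 4, OF e11_36] ncl[of f 11 47 1, OF e11_47] ncl[of f 11 47 2, OF e11_47] ncl[of f 11 47 3, OF e11_47] ncl[of f 11 47 4, OF e11_47] ncl[of f 12 13 1, OF e12_13] ncl[of f 12 13 2, OF e12_13] ncl[of f 12 13 3, OF e12_13] ncl[of f 12 13 4, OF e12_13] ncl[of f 12 16 1, OF e12_16] ncl[of f 12 16 2, OF e12_16] ncl[of f 12 16 3, OF e12_16] ncl[of f 12 16 4, OF e12_16]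 ncl[of f 12 21 1, OF e12_21] ncl[of f 12 21 2, OF e12_21] ncl[of f 12 21 3, OF e12_21] ncl[of f 12 21 4, OF e12_21] ncl[of f 12 28 1, OF e12_28] ncl[of f 12 28 2, OF e12_28] ncl[of f 12 28 3, OF e12_28] ncl[of f 12 28 4, OF e12_28] ncl[of f 12 37 1, OF e12_37] ncl[of f 12 37 2, OF e12_37] ncl[of f 12 37 3, OF e12_37] ncl[of f 12 37 4, OF e12_37] ncl[of f 12 48 1, OF e12_48] ncl[of f 12 48 2, OF e12_48] ncl[of f 12 48 3, OF e12_48] ncl[of f 12 48 4, OF e12_48] ncl[of f 13 14 1, OF e13_14] ncl[of f 13 14 2, OF e13_14] ncl[of f 13 14 3, OF e13_14] ncl[of f 13 14 4, OF e13_14] ncl[of f 13 17 1, OF e13_17] ncl[of f 13 17 2, OF e13_17] ncl[of f 13 17 3, OF e13_17] ncl[of f 13 17 4, OF e13_17] ncl[of f 13 22 1, OF e13_22] ncl[of f 13 22 2, OF e13_22] ncl[of f 13 22 3, OF e13_22] ncl[of f 13 22 4, OF e13_22] ncl[of f 13 29 1, OF e13_29] ncl[of f 13 29 2, OF e13_29] ncl[of f 13 29 3, OF e13_29] ncl[of f 13 29 4, OF e13_29] ncl[of f 13 38 1, OF e13_38] ncl[of f 13 38 2, OF e13_38] ncl[of f 13 38 3, OF e13_38] ncl[of f 13 38 4, OF e13_38] ncl[of f 13 49 1, OF e13_49] ncl[of f 13 49 2, OF e13_49] ncl[of f 13 49 3, OF e13_49] ncl[of f 13 49 4, OF e13_49]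 ncl[of f 14 15 1, OF e14_15] ncl[of f 14 15 2, OF e14_15] ncl[of f 14 15 3, OF e14_15] ncl[of f 14 15 4, OF e14_15] ncl[of f 14 18 1, OF e14_18] ncl[of f 14 18 2, OF e14_18] ncl[of f 14 18 3, OF e14_18] ncl[of f 14 18 4, OF e14_18] ncl[of f 14 23 1, OF e14_23] ncl[of f 14 23 2, OF e14_23] ncl[of f 14 23 3, OF e14_23] ncl[of f 14 23 4, OF e14_23] ncl[of f 14 30 1, OF e14_30] ncl[of f 14 30 2, OF e14_30] ncl[of f 14 30 3, OF e14_30] ncl[of f 14 30 4, OF e14_30] ncl[of f 14 39 1, OF e14_39] ncl[of f 14 39 2, OF e14_39] ncl[of f 14 39 3, OF e14_39] ncl[of f 14 39 4, OF e14_39] ncl[of f 14 50 1, OF e14_50] ncl[of f 14 50 2, OF e14_50] ncl[of f 14 50 3, OF e14_50] ncl[of f 14 50 4, OF e14_50] ncl[of f 15 16 1, OF e15_16] ncl[of f 15 16 2, OF e15_16] ncl[of f 15 16 3, OF e15_16] ncl[of f 15 16 4, OF e15_16] ncl[of f 15 19 1, OF e15_19] ncl[of f 15 19 2, OF e15_19] ncl[of f 15 19 3, OF e15_19] ncl[of f 15 19 4, OF e15_19] ncl[of f 15 24 1, OF e15_24] ncl[of f 15 24 2, OF e15_24] ncl[of f 15 24 3, OF e15_24] ncl[of f 15 24 4, OF e15_24] ncl[of f 15 31 1, OF e15_31] ncl[of f 15 31 2, OF e15_31] ncl[of f 15 31 3, OF e15_31] ncl[of f 15 31 4, OF e15_31]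 ncl[of f 15 40 1, OF e15_40] ncl[of f 15 40 2, OF e15_40] ncl[of f 15 40 3, OF e15_40] ncl[of f 15 40 4, OF e15_40] ncl[of f 15 51 1, OF e15_51] ncl[of f 15 51 2, OF e15_51] ncl[of f 15 51 3, OF e15_51] ncl[of f 15 51 4, OF e15_51] ncl[of f 16 17 1, OF e16_17] ncl[of f 16 17 2, OF e16_17] ncl[of f 16 17 3, OF e16_17] ncl[of f 16 17 4, OF e16_17] ncl[of f 16 20 1, OF e16_20] ncl[of f 16 20 2, OF e16_20] ncl[of f 16 20 3, OF e16_20] ncl[of f 16 20 4, OF e16_20] ncl[of f 16 25 1, OF e16_25] ncl[of f 16 25 2, OF e16_25] ncl[of f 16 25 3, OF e16_25] ncl[of f 16 25 4, OF e16_25] ncl[of f 16 32 1, OF e16_32] ncl[of f 16 32 2, OF e16_32] ncl[of f 16 32 3, OF e16_32] ncl[of f 16 32 4, OF e16_32] ncl[of f 16 41 1, OF e16_41] ncl[of f 16 41 2, OF e16_41] ncl[of f 16 41 3, OF e16_41] ncl[of f 16 41 4, OF e16_41] ncl[of f 16 52 1, OF e16_52] ncl[of f 16 52 2, OF e16_52] ncl[of f 16 52 3, OF e16_52] ncl[of f 16 52 4, OF e16_52] ncl[of f 17 18 1, OF e17_18] ncl[of f 17 18 2, OF e17_18] ncl[of f 17 18 3, OF e17_18] ncl[of f 17 18 4, OF e17_18] ncl[of f 17 21 1, OF e17_21] ncl[of f 17 21 2, OF e17_21] ncl[of f 17 21 3, OF e17_21] ncl[of f 17 21 4, OF e17_21]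 ncl[of f 17 26 1, OF e17_26] ncl[of f 17 26 2, OF e17_26] ncl[of f 17 26 3, OF e17_26] ncl[of f 17 26 4, OF e17_26] ncl[of f 17 33 1, OF e17_33] ncl[of f 17 33 2, OF e17_33] ncl[of f 17 33 3, OF e17_33] ncl[of f 17 33 4, OF e17_33] ncl[of f 17 42 1, OF e17_42] ncl[of f 17 42 2, OF e17_42] ncl[of f 17 42 3, OF e17_42] ncl[of f 17 42 4, OF e17_42] ncl[of f 17 53 1, OF e17_53] ncl[of f 17 53 2, OF e17_53] ncl[of f 17 53 3, OF e17_53] ncl[of f 17 53 4, OF e17_53] ncl[of f 18 19 1, OF e18_19] ncl[of f 18 19 2, OF e18_19] ncl[of f 18 19 3, OF e18_19] ncl[of f 18 19 4, OF e18_19] ncl[of f 18 22 1, OF e18_22] ncl[of f 18 22 2, OF e18_22] ncl[of f 18 22 3, OF e18_22] ncl[of f 18 22 4, OF e18_22] ncl[of f 18 27 1, OF e18_27] ncl[of f 18 27 2, OF e18_27] ncl[of f 18 27 3, OF e18_27] ncl[of f 18 27 4, OF e18_27] ncl[of f 18 34 1, OF e18_34] ncl[of f 18 34 2, OF e18_34] ncl[of f 18 34 3, OF e18_34] ncl[of f 18 34 4, OF e18_34] ncl[of f 18 43 1, OF e18_43] ncl[of f 18 43 2, OF e18_43] ncl[of f 18 43 3, OF e18_43] ncl[of f 18 43 4, OF e18_43] ncl[of f 18 54 1, OF e18_54] ncl[of f 18 54 2, OF e18_54] ncl[of f 18 54 3, OF e18_54] ncl[of f 18 54 4, OF e18_54]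 ncl[of f 19 20 1, OF e19_20] ncl[of f 19 20 2, OF e19_20] ncl[of f 19 20 3, OF e19_20] ncl[of f 19 20 4, OF e19_20] ncl[of f 19 23 1, OF e19_23] ncl[of f 19 23 2, OF e19_23] ncl[of f 19 23 3, OF e19_23] ncl[of f 19 23 4, OF e19_23] ncl[of f 19 28 1, OF e19_28] ncl[of f 19 28 2, OF e19_28] ncl[of f 19 28 3, OF e19_28] ncl[of f 19 28 4, OF e19_28] ncl[of f 19 35 1, OF e19_35] ncl[of f 19 35 2, OF e19_35] ncl[of f 19 35 3, OF e19_35] ncl[of f 19 35 4, OF e19_35] ncl[of f 19 44 1, OF e19_44] ncl[of f 19 44 2, OF e19_44] ncl[of f 19 44 3, OF e19_44] ncl[of f 19 44 4, OF e19_44] ncl[of f 19 55 1, OF e19_55] ncl[of f 19 55 2, OF e19_55] ncl[of f 19 55 3, OF e19_55] ncl[of f 19 55 4, OF e19_55] ncl[of f 20 21 1, OF e20_21] ncl[of f 20 21 2, OF e20_21] ncl[of f 20 21 3, OF e20_21] ncl[of f 20 21 4, OF e20_21] ncl[of f 20 24 1, OF e20_24] ncl[of f 20 24 2, OF e20_24] ncl[of f 20 24 3, OF e20_24] ncl[of f 20 24 4, OF e20_24] ncl[of f 20 29 1, OF e20_29] ncl[of f 20 29 2, OF e20_29] ncl[of f 20 29 3, OF e20_29] ncl[of f 20 29 4, OF e20_29] ncl[of f 20 36 1, OF e20_36] ncl[of f 20 36 2, OF e20_36] ncl[of f 20 36 3, OF e20_36] ncl[of f 20 36 4, OF e20_36]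 ncl[of f 20 45 1, OF e20_45] ncl[of f 20 45 2, OF e20_45] ncl[of f 20 45 3, OF e20_45] ncl[of f 20 45 4, OF e20_45] ncl[of f 20 56 1, OF e20_56] ncl[of f 20 56 2, OF e20_56] ncl[of f 20 56 3, OF e20_56] ncl[of f 20 56 4, OF e20_56] ncl[of f 21 22 1, OF e21_22] ncl[of f 21 22 2, OF e21_22] ncl[of f 21 22 3, OF e21_22] ncl[of f 21 22 4, OF e21_22] ncl[of f 21 25 1, OF e21_25] ncl[of f 21 25 2, OF e21_25] ncl[of f 21 25 3, OF e21_25] ncl[of f 21 25 4, OF e21_25] ncl[of f 21 30 1, OF e21_30] ncl[of f 21 30 2, OF e21_30] ncl[of f 21 30 3, OF e21_30] ncl[of f 21 30 4, OF e21_30] ncl[of f 21 37 1, OF e21_37] ncl[of f 21 37 2, OF e21_37] ncl[of f 21 37 3, OF e21_37] ncl[of f 21 37 4, OF e21_37] ncl[of f 21 46 1, OF e21_46] ncl[of f 21 46 2, OF e21_46] ncl[of f 21 46 3, OF e21_46] ncl[of f 21 46 4, OF e21_46] ncl[of f 21 57 1, OF e21_57] ncl[of f 21 57 2, OF e21_57] ncl[of f 21 57 3, OF e21_57] ncl[of f 21 57 4, OF e21_57] ncl[of f 22 23 1, OF e22_23] ncl[of f 22 23 2, OF e22_23] ncl[of f 22 23 3, OF e22_23] ncl[of f 22 23 4, OF e22_23] ncl[of f 22 26 1, OF e22_26] ncl[of f 22 26 2, OF e22_26] ncl[of f 22 26 3, OF e22_26] ncl[of f 22 26 4, OF e22_26]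 ncl[of f 22 31 1, OF e22_31] ncl[of f 22 31 2, OF e22_31] ncl[of f 22 31 3, OF e22_31] ncl[of f 22 31 4, OF e22_31] ncl[of f 22 38 1, OF e22_38] ncl[of f 22 38 2, OF e22_38] ncl[of f 22 38 3, OF e22_38] ncl[of f 22 38 4, OF e22_38] ncl[of f 22 47 1, OF e22_47] ncl[of f 22 47 2, OF e22_47] ncl[of f 22 47 3, OF e22_47] ncl[of f 22 47 4, OF e22_47] ncl[of f 22 58 1, OF e22_58] ncl[of f 22 58 2, OF e22_58] ncl[of f 22 58 3, OF e22_58] ncl[of f 22 58 4, OF e22_58] ncl[of f 23 24 1, OF e23_24] ncl[of f 23 24 2, OF e23_24] ncl[of f 23 24 3, OF e23_24] ncl[of f 23 24 4, OF e23_24] ncl[of f 23 27 1, OF e23_27] ncl[of f 23 27 2, OF e23_27] ncl[of f 23 27 3, OF e23_27] ncl[of f 23 27 4, OF e23_27] ncl[of f 23 32 1, OF e23_32] ncl[of f 23 32 2, OF e23_32] ncl[of f 23 32 3, OF e23_32] ncl[of f 23 32 4, OF e23_32] ncl[of f 23 39 1, OF e23_39] ncl[of f 23 39 2, OF e23_39] ncl[of f 23 39 3, OF e23_39] ncl[of f 23 39 4, OF e23_39] ncl[of f 23 48 1, OF e23_48] ncl[of f 23 48 2, OF e23_48] ncl[of f 23 48 3, OF e23_48] ncl[of f 23 48 4, OF e23_48] ncl[of f 24 25 1, OF e24_25] ncl[of f 24 25 2, OF e24_25] ncl[of f 24 25 3, OF e24_25] ncl[of f 24 25 4, OF e24_25]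 ncl[of f 24 28 1, OF e24_28] ncl[of f 24 28 2, OF e24_28] ncl[of f 24 28 3, OF e24_28] ncl[of f 24 28 4, OF e24_28] ncl[of f 24 33 1, OF e24_33] ncl[of f 24 33 2, OF e24_33] ncl[of f 24 33 3, OF e24_33] ncl[of f 24 33 4, OF e24_33] ncl[of f 24 40 1, OF e24_40] ncl[of f 24 40 2, OF e24_40] ncl[of f 24 40 3, OF e24_40] ncl[of f 24 40 4, OF e24_40] ncl[of f 24 49 1, OF e24_49] ncl[of f 24 49 2, OF e24_49] ncl[of f 24 49 3, OF e24_49] ncl[of f 24 49 4, OF e24_49] ncl[of f 25 26 1, OF e25_26] ncl[of f 25 26 2, OF e25_26] ncl[of f 25 26 3, OF e25_26] ncl[of f 25 26 4, OF e25_26] ncl[of f 25 29 1, OF e25_29] ncl[of f 25 29 2, OF e25_29] ncl[of f 25 29 3, OF e25_29] ncl[of f 25 29 4, OF e25_29] ncl[of f 25 34 1, OF e25_34] ncl[of f 25 34 2, OF e25_34] ncl[of f 25 34 3, OF e25_34] ncl[of f 25 34 4, OF e25_34] ncl[of f 25 41 1, OF e25_41] ncl[of f 25 41 2, OF e25_41] ncl[of f 25 41 3, OF e25_41] ncl[of f 25 41 4, OF e25_41] ncl[of f 25 50 1, OF e25_50] ncl[of f 25 50 2, OF e25_50] ncl[of f 25 50 3, OF e25_50] ncl[of f 25 50 4, OF e25_50] ncl[of f 26 27 1, OF e26_27] ncl[of f 26 27 2, OF e26_27] ncl[of f 26 27 3, OF e26_27] ncl[of f 26 27 4, OF e26_27]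 ncl[of f 26 30 1, OF e26_30] ncl[of f 26 30 2, OF e26_30] ncl[of f 26 30 3, OF e26_30] ncl[of f 26 30 4, OF e26_30] ncl[of f 26 35 1, OF e26_35] ncl[of f 26 35 2, OF e26_35] ncl[of f 26 35 3, OF e26_35] ncl[of f 26 35 4, OF e26_35] ncl[of f 26 42 1, OF e26_42] ncl[of f 26 42 2, OF e26_42] ncl[of f 26 42 3, OF e26_42] ncl[of f 26 42 4, OF e26_42] ncl[of f 26 51 1, OF e26_51] ncl[of f 26 51 2, OF e26_51] ncl[of f 26 51 3, OF e26_51] ncl[of f 26 51 4, OF e26_51] ncl[of f 27 28 1, OF e27_28] ncl[of f 27 28 2, OF e27_28] ncl[of f 27 28 3, OF e27_28] ncl[of f 27 28 4, OF e27_28] ncl[of f 27 31 1, OF e27_31] ncl[of f 27 31 2, OF e27_31] ncl[of f 27 31 3, OF e27_31] ncl[of f 27 31 4, OF e27_31] ncl[of f 27 36 1, OF e27_36] ncl[of f 27 36 2, OF e27_36] ncl[of f 27 36 3, OF e27_36] ncl[of f 27 36 4, OF e27_36] ncl[of f 27 43 1, OF e27_43] ncl[of f 27 43 2, OF e27_43] ncl[of f 27 43 3, OF e27_43] ncl[of f 27 43 4, OF e27_43] ncl[of f 27 52 1, OF e27_52] ncl[of f 27 52 2, OF e27_52] ncl[of f 27 52 3, OF e27_52] ncl[of f 27 52 4, OF e27_52] ncl[of f 28 29 1, OF e28_29] ncl[of f 28 29 2, OF e28_29] ncl[of f 28 29 3, OF e28_29] ncl[of f 28 29 4, OF e28_29]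 ncl[of f 28 32 1, OF e28_32] ncl[of f 28 32 2, OF e28_32] ncl[of f 28 32 3, OF e28_32] ncl[of f 28 32 4, OF e28_32] ncl[of f 28 37 1, OF e28_37] ncl[of f 28 37 2, OF e28_37] ncl[of f 28 37 3, OF e28_37] ncl[of f 28 37 4, OF e28_37] ncl[of f 28 44 1, OF e28_44] ncl[of f 28 44 2, OF e28_44] ncl[of f 28 44 3, OF e28_44] ncl[of f 28 44 4, OF e28_44] ncl[of f 28 53 1, OF e28_53] ncl[of f 28 53 2, OF e28_53] ncl[of f 28 53 3, OF e28_53] ncl[of f 28 53 4, OF e28_53] ncl[of f 29 30 1, OF e29_30] ncl[of f 29 30 2, OF e29_30] ncl[of f 29 30 3, OF e29_30] ncl[of f 29 30 4, OF e29_30] ncl[of f 29 33 1, OF e29_33] ncl[of f 29 33 2, OF e29_33] ncl[of f 29 33 3, OF e29_33] ncl[of f 29 33 4, OF e29_33] ncl[of f 29 38 1, OF e29_38] ncl[of f 29 38 2, OF e29_38] ncl[of f 29 38 3, OF e29_38] ncl[of f 29 38 4, OF e29_38] ncl[of f 29 45 1, OF e29_45] ncl[of f 29 45 2, OF e29_45] ncl[of f 29 45 3, OF e29_45] ncl[of f 29 45 4, OF e29_45] ncl[of f 29 54 1, OF e29_54] ncl[of f 29 54 2, OF e29_54] ncl[of f 29 54 3, OF e29_54] ncl[of f 29 54 4, OF e29_54] ncl[of f 30 31 1, OF e30_31] ncl[of f 30 31 2, OF e30_31] ncl[of f 30 31 3, OF e30_31] ncl[of f 30 31 4, OF e30_31]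 ncl[of f 30 34 1, OF e30_34] ncl[of f 30 34 2, OF e30_34] ncl[of f 30 34 3, OF e30_34] ncl[of f 30 34 4, OF e30_34] ncl[of f 30 39 1, OF e30_39] ncl[of f 30 39 2, OF e30_39] ncl[of f 30 39 3, OF e30_39] ncl[of f 30 39 4, OF e30_39] ncl[of f 30 46 1, OF e30_46] ncl[of f 30 46 2, OF e30_46] ncl[of f 30 46 3, OF e30_46] ncl[of f 30 46 4, OF e30_46] ncl[of f 30 55 1, OF e30_55] ncl[of f 30 55 2, OF e30_55] ncl[of f 30 55 3, OF e30_55] ncl[of f 30 55 4, OF e30_55] ncl[of f 31 32 1, OF e31_32] ncl[of f 31 32 2, OF e31_32] ncl[of f 31 32 3, OF e31_32] ncl[of f 31 32 4, OF e31_32] ncl[of f 31 35 1, OF e31_35] ncl[of f 31 35 2, OF e31_35] ncl[of f 31 35 3, OF e31_35] ncl[of f 31 35 4, OF e31_35] ncl[of f 31 40 1, OF e31_40] ncl[of f 31 40 2, OF e31_40] ncl[of f 31 40 3, OF e31_40] ncl[of f 31 40 4, OF e31_40] ncl[of f 31 47 1, OF e31_47] ncl[of f 31 47 2, OF e31_47] ncl[of f 31 47 3, OF e31_47] ncl[of f 31 47 4, OF e31_47] ncl[of f 31 56 1, OF e31_56] ncl[of f 31 56 2, OF e31_56] ncl[of f 31 56 3, OF e31_56] ncl[of f 31 56 4, OF e31_56] ncl[of f 32 33 1, OF e32_33] ncl[of f 32 33 2, OF e32_33] ncl[of f 32 33 3, OF e32_33] ncl[of f 32 33 4, OF e32_33]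 ncl[of f 32 36 1, OF e32_36] ncl[of f 32 36 2, OF e32_36] ncl[of f 32 36 3, OF e32_36] ncl[of f 32 36 4, OF e32_36] ncl[of f 32 41 1, OF e32_41] ncl[of f 32 41 2, OF e32_41] ncl[of f 32 41 3, OF e32_41] ncl[of f 32 41 4, OF e32_41] ncl[of f 32 48 1, OF e32_48] ncl[of f 32 48 2, OF e32_48] ncl[of f 32 48 3, OF e32_48] ncl[of f 32 48 4, OF e32_48] ncl[of f 32 57 1, OF e32_57] ncl[of f 32 57 2, OF e32_57] ncl[of f 32 57 3, OF e32_57] ncl[of f 32 57 4, OF e32_57] ncl[of f 33 34 1, OF e33_34] ncl[of f 33 34 2, OF e33_34] ncl[of f 33 34 3, OF e33_34] ncl[of f 33 34 4, OF e33_34] ncl[of f 33 37 1, OF e33_37] ncl[of f 33 37 2, OF e33_37] ncl[of f 33 37 3, OF e33_37] ncl[of f 33 37 4, OF e33_37] ncl[of f 33 42 1, OF e33_42] ncl[of f 33 42 2, OF e33_42] ncl[of f 33 42 3, OF e33_42] ncl[of f 33 42 4, OF e33_42] ncl[of f 33 49 1, OF e33_49] ncl[of f 33 49 2, OF e33_49] ncl[of f 33 49 3, OF e33_49] ncl[of f 33 49 4, OF e33_49] ncl[of f 33 58 1, OF e33_58] ncl[of f 33 58 2, OF e33_58] ncl[of f 33 58 3, OF e33_58] ncl[of f 33 58 4, OF e33_58] ncl[of f 34 35 1, OF e34_35] ncl[of f 34 35 2, OF e34_35] ncl[of f 34 35 3, OF e34_35] ncl[of f 34 35 4, OF e34_35]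 ncl[of f 34 38 1, OF e34_38] ncl[of f 34 38 2, OF e34_38] ncl[of f 34 38 3, OF e34_38] ncl[of f 34 38 4, OF e34_38] ncl[of f 34 43 1, OF e34_43] ncl[of f 34 43 2, OF e34_43] ncl[of f 34 43 3, OF e34_43] ncl[of f 34 43 4, OF e34_43] ncl[of f 34 50 1, OF e34_50] ncl[of f 34 50 2, OF e34_50] ncl[of f 34 50 3, OF e34_50] ncl[of f 34 50 4, OF e34_50] ncl[of f 35 36 1, OF e35_36] ncl[of f 35 36 2, OF e35_36] ncl[of f 35 36 3, OF e35_36] ncl[of f 35 36 4, OF e35_36] ncl[of f 35 39 1, OF e35_39] ncl[of f 35 39 2, OF e35_39] ncl[of f 35 39 3, OF e35_39] ncl[of f 35 39 4, OF e35_39] ncl[of f 35 44 1, OF e35_44] ncl[of f 35 44 2, OF e35_44] ncl[of f 35 44 3, OF e35_44] ncl[of f 35 44 4, OF e35_44] ncl[of f 35 51 1, OF e35_51] ncl[of f 35 51 2, OF e35_51] ncl[of f 35 51 3, OF e35_51] ncl[of f 35 51 4, OF e35_51] ncl[of f 36 37 1, OF e36_37] ncl[of f 36 37 2, OF e36_37] ncl[of f 36 37 3, OF e36_37] ncl[of f 36 37 4, OF e36_37] ncl[of f 36 40 1, OF e36_40] ncl[of f 36 40 2, OF e36_40] ncl[of f 36 40 3, OF e36_40] ncl[of f 36 40 4, OF e36_40] ncl[of f 36 45 1, OF e36_45] ncl[of f 36 45 2, OF e36_45] ncl[of f 36 45 3, OF e36_45] ncl[of f 36 45 4, OF e36_45]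 ncl[of f 36 52 1, OF e36_52] ncl[of f 36 52 2, OF e36_52] ncl[of f 36 52 3, OF e36_52] ncl[of f 36 52 4, OF e36_52] ncl[of f 37 38 1, OF e37_38] ncl[of f 37 38 2, OF e37_38] ncl[of f 37 38 3, OF e37_38] ncl[of f 37 38 4, OF e37_38] ncl[of f 37 41 1, OF e37_41] ncl[of f 37 41 2, OF e37_41] ncl[of f 37 41 3, OF e37_41] ncl[of f 37 41 4, OF e37_41] ncl[of f 37 46 1, OF e37_46] ncl[of f 37 46 2, OF e37_46] ncl[of f 37 46 3, OF e37_46] ncl[of f 37 46 4, OF e37_46] ncl[of f 37 53 1, OF e37_53] ncl[of f 37 53 2, OF e37_53] ncl[of f 37 53 3, OF e37_53] ncl[of f 37 53 4, OF e37_53] ncl[of f 38 39 1, OF e38_39] ncl[of f 38 39 2, OF e38_39] ncl[of f 38 39 3, OF e38_39] ncl[of f 38 39 4, OF e38_39] ncl[of f 38 42 1, OF e38_42] ncl[of f 38 42 2, OF e38_42] ncl[of f 38 42 3, OF e38_42] ncl[of f 38 42 4, OF e38_42] ncl[of f 38 47 1, OF e38_47] ncl[of f 38 47 2, OF e38_47] ncl[of f 38 47 3, OF e38_47] ncl[of f 38 47 4, OF e38_47] ncl[of f 38 54 1, OF e38_54] ncl[of f 38 54 2, OF e38_54] ncl[of f 38 54 3, OF e38_54] ncl[of f 38 54 4, OF e38_54] ncl[of f 39 40 1, OF e39_40] ncl[of f 39 40 2, OF e39_40] ncl[of f 39 40 3, OF e39_40] ncl[of f 39 40 4, OF e39_40]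 ncl[of f 39 43 1, OF e39_43] ncl[of f 39 43 2, OF e39_43] ncl[of f 39 43 3, OF e39_43] ncl[of f 39 43 4, OF e39_43] ncl[of f 39 48 1, OF e39_48] ncl[of f 39 48 2, OF e39_48] ncl[of f 39 48 3, OF e39_48] ncl[of f 39 48 4, OF e39_48] ncl[of f 39 55 1, OF e39_55] ncl[of f 39 55 2, OF e39_55] ncl[of f 39 55 3, OF e39_55] ncl[of f 39 55 4, OF e39_55] ncl[of f 40 41 1, OF e40_41] ncl[of f 40 41 2, OF e40_41] ncl[of f 40 41 3, OF e40_41] ncl[of f 40 41 4, OF e40_41] ncl[of f 40 44 1, OF e40_44] ncl[of f 40 44 2, OF e40_44] ncl[of f 40 44 3, OF e40_44] ncl[of f 40 44 4, OF e40_44] ncl[of f 40 49 1, OF e40_49] ncl[of f 40 49 2, OF e40_49] ncl[of f 40 49 3, OF e40_49] ncl[of f 40 49 4, OF e40_49] ncl[of f 40 56 1, OF e40_56] ncl[of f 40 56 2, OF e40_56] ncl[of f 40 56 3, OF e40_56] ncl[of f 40 56 4, OF e40_56] ncl[of f 41 42 1, OF e41_42] ncl[of f 41 42 2, OF e41_42] ncl[of f 41 42 3, OF e41_42] ncl[of f 41 42 4, OF e41_42] ncl[of f 41 45 1, OF e41_45] ncl[of f 41 45 2, OF e41_45] ncl[of f 41 45 3, OF e41_45] ncl[of f 41 45 4, OF e41_45] ncl[of f 41 50 1, OF e41_50] ncl[of f 41 50 2, OF e41_50] ncl[of f 41 50 3, OF e41_50] ncl[of f 41 50 4, OF e41_50]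 ncl[of f 41 57 1, OF e41_57] ncl[of f 41 57 2, OF e41_57] ncl[of f 41 57 3, OF e41_57] ncl[of f 41 57 4, OF e41_57] ncl[of f 42 43 1, OF e42_43] ncl[of f 42 43 2, OF e42_43] ncl[of f 42 43 3, OF e42_43] ncl[of f 42 43 4, OF e42_43] ncl[of f 42 46 1, OF e42_46] ncl[of f 42 46 2, OF e42_46] ncl[of f 42 46 3, OF e42_46] ncl[of f 42 46 4, OF e42_46] ncl[of f 42 51 1, OF e42_51] ncl[of f 42 51 2, OF e42_51] ncl[of f 42 51 3, OF e42_51] ncl[of f 42 51 4, OF e42_51] ncl[of f 42 58 1, OF e42_58] ncl[of f 42 58 2, OF e42_58] ncl[of f 42 58 3, OF e42_58] ncl[of f 42 58 4, OF e42_58] ncl[of f 43 44 1, OF e43_44] ncl[of f 43 44 2, OF e43_44] ncl[of f 43 44 3, OF e43_44] ncl[of f 43 44 4, OF e43_44] ncl[of f 43 47 1, OF e43_47] ncl[of f 43 47 2, OF e43_47] ncl[of f 43 47 3, OF e43_47] ncl[of f 43 47 4, OF e43_47] ncl[of f 43 52 1, OF e43_52] ncl[of f 43 52 2, OF e43_52] ncl[of f 43 52 3, OF e43_52] ncl[of f 43 52 4, OF e43_52] ncl[of f 44 45 1, OF e44_45] ncl[of f 44 45 2, OF e44_45] ncl[of f 44 45 3, OF e44_45] ncl[of f 44 45 4, OF e44_45] ncl[of f 44 48 1, OF e44_48] ncl[of f 44 48 2, OF e44_48] ncl[of f 44 48 3, OF e44_48] ncl[of f 44 48 4, OF e44_48]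 ncl[of f 44 53 1, OF e44_53] ncl[of f 44 53 2, OF e44_53] ncl[of f 44 53 3, OF e44_53] ncl[of f 44 53 4, OF e44_53] ncl[of f 45 46 1, OF e45_46] ncl[of f 45 46 2, OF e45_46] ncl[of f 45 46 3, OF e45_46] ncl[of f 45 46 4, OF e45_46] ncl[of f 45 49 1, OF e45_49] ncl[of f 45 49 2, OF e45_49] ncl[of f 45 49 3, OF e45_49] ncl[of f 45 49 4, OF e45_49] ncl[of f 45 54 1, OF e45_54] ncl[of f 45 54 2, OF e45_54] ncl[of f 45 54 3, OF e45_54] ncl[of f 45 54 4, OF e45_54] ncl[of f 46 47 1, OF e46_47] ncl[of f 46 47 2, OF e46_47] ncl[of f 46 47 3, OF e46_47] ncl[of f 46 47 4, OF e46_47] ncl[of f 46 50 1, OF e46_50] ncl[of f 46 50 2, OF e46_50] ncl[of f 46 50 3, OF e46_50] ncl[of f 46 50 4, OF e46_50] ncl[of f 46 55 1, OF e46_55] ncl[of f 46 55 2, OF e46_55] ncl[of f 46 55 3, OF e46_55] ncl[of f 46 55 4, OF e46_55] ncl[of f 47 48 1, OF e47_48] ncl[of f 47 48 2, OF e47_48] ncl[of f 47 48 3, OF e47_48] ncl[of f 47 48 4, OF e47_48] ncl[of f 47 51 1, OF e47_51] ncl[of f 47 51 2, OF e47_51] ncl[of f 47 51 3, OF e47_51] ncl[of f 47 51 4, OF e47_51] ncl[of f 47 56 1, OF e47_56] ncl[of f 47 56 2, OF e47_56] ncl[of f 47 56 3, OF e47_56] ncl[of f 47 56 4, OF e47_56]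 ncl[of f 48 49 1, OF e48_49] ncl[of f 48 49 2, OF e48_49] ncl[of f 48 49 3, OF e48_49] ncl[of f 48 49 4, OF e48_49] ncl[of f 48 52 1, OF e48_52] ncl[of f 48 52 2, OF e48_52] ncl[of f 48 52 3, OF e48_52] ncl[of f 48 52 4, OF e48_52] ncl[of f 48 57 1, OF e48_57] ncl[of f 48 57 2, OF e48_57] ncl[of f 48 57 3, OF e48_57] ncl[of f 48 57 4, OF e48_57] ncl[of f 49 50 1, OF e49_50] ncl[of f 49 50 2, OF e49_50] ncl[of f 49 50 3, OF e49_50] ncl[of f 49 50 4, OF e49_50] ncl[of f 49 53 1, OF e49_53] ncl[of f 49 53 2, OF e49_53] ncl[of f 49 53 3, OF e49_53] ncl[of f 49 53 4, OF e49_53] ncl[of f 49 58 1, OF e49_58] ncl[of f 49 58 2, OF e49_58] ncl[of f 49 58 3, OF e49_58] ncl[of f 49 58 4, OF e49_58] ncl[of f 50 51 1, OF e50_51] ncl[of f 50 51 2, OF e50_51] ncl[of f 50 51 3, OF e50_51] ncl[of f 50 51 4, OF e50_51] ncl[of f 50 54 1, OF e50_54] ncl[of f 50 54 2, OF e50_54] ncl[of f 50 54 3, OF e50_54] ncl[of f 50 54 4, OF e50_54] ncl[of f 51 52 1, OF e51_52] ncl[of f 51 52 2, OF e51_52] ncl[of f 51 52 3, OF e51_52] ncl[of f 51 52 4, OF e51_52] ncl[of f 51 55 1, OF e51_55] ncl[of f 51 55 2, OF e51_55] ncl[of f 51 55 3, OF e51_55] ncl[of f 51 55 4, OF e51_55]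 ncl[of f 52 53 1, OF e52_53] ncl[of f 52 53 2, OF e52_53] ncl[of f 52 53 3, OF e52_53] ncl[of f 52 53 4, OF e52_53] ncl[of f 52 56 1, OF e52_56] ncl[of f 52 56 2, OF e52_56] ncl[of f 52 56 3, OF e52_56] ncl[of f 52 56 4, OF e52_56] ncl[of f 53 54 1, OF e53_54] ncl[of f 53 54 2, OF e53_54] ncl[of f 53 54 3, OF e53_54] ncl[of f 53 54 4, OF e53_54] ncl[of f 53 57 1, OF e53_57] ncl[of f 53 57 2, OF e53_57] ncl[of f 53 57 3, OF e53_57] ncl[of f 53 57 4, OF e53_57] ncl[of f 54 55 1, OF e54_55] ncl[of f 54 55 2, OF e54_55] ncl[of f 54 55 3, OF e54_55] ncl[of f 54 55 4, OF e54_55] ncl[of f 54 58 1, OF e54_58] ncl[of f 54 58 2, OF e54_58] ncl[of f 54 58 3, OF e54_58] ncl[of f 54 58 4, OF e54_58] ncl[of f 55 56 1, OF e55_56] ncl[of f 55 56 2, OF e55_56] ncl[of f 55 56 3, OF e55_56] ncl[of f 55 56 4, OF e55_56] ncl[of f 56 57 1, OF e56_57] ncl[of f 56 57 2, OF e56_57] ncl[of f 56 57 3, OF e56_57] ncl[of f 56 57 4, OF e56_57] ncl[of f 57 58 1, OF e57_58] ncl[of f 57 58 2, OF e57_58] ncl[of f 57 58 3, OF e57_58] ncl[of f 57 58 4, OF e57_58]])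
qed

definition col57 :: "nat list" where
  "col57 = [3, 1, 4, 2, 1, 3, 1, 4, 3, 1, 2, 1, 4, 3, 1, 2, 1, 2, 3, 1, 2, 1, 2, 3, 4, 2, 4, 2, 3, 4, 2, 4, 2, 1, 4, 3, 4, 2, 1, 4, 3, 4, 3, 1, 2, 3, 4, 3, 1, 2, 3, 1, 3, 4, 2, 3, 1]"

definition g57 :: "nat \<Rightarrow> nat" where "g57 i = col57 ! (i - 1)"

lemma g57_check: "list_all (\<lambda>a. list_all (\<lambda>x. a + x^2 \<le> 57 \<longrightarrow> g57 a \<noteq> g57 (a + x^2)) [1..<8]) [1..<58]"
  by code_simp

lemma g57_col: "list_all (\<lambda>a. g57 a \<in> {1..4}) [1..<58]"
  by code_simp

lemma g57_coloring: "m \<le> 57 \<Longrightarrow> coloring 4 m g57"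
  using g57_col unfolding coloring_def list_all_iff by auto

lemma sq_bound: "(x::nat)^2 \<le> 56 \<Longrightarrow> x < 8"
proof (rule ccontr)
  assume a: "(x::nat)^2 \<le> 56" "\<not> x < 8"
  from a(2) have "8 \<le> x" by linarith
  then have "8*8 \<le> x*x" using mult_le_mono by blast
  with a show False by (simp add: power2_eq_square)
qed

lemma g57_nomono: "m \<le> 57 \<Longrightarrow> \<not> has_mono_square_diff m g57"
proof
  assume m: "m \<le> 57" and "has_mono_square_diff m g57"
  then obtain a b x where h: "1 \<le> a" "a < b" "b \<le> m" "g57 a = g57 b" "x > 0" "b - a = x^2"
    unfolding has_mono_square_diff_def by blast
  have b: "b = a + x^2" using h by simp
  have "x < 8" using h m by (intro sq_bound) simp
  then have "x \<in> set [1..<8]" using h by simp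
  moreover have "a \<in> set [1..<58]" using h m by simp
  ultimately have "a + x^2 \<le> 57 \<longrightarrow> g57 a \<noteq> g57 (a + x^2)"
    using g57_check unfolding list_all_iff by blast
  then show False using h m b by simp
qed

lemma all58: "coloring 4 58 f \<Longrightarrow> has_mono_square_diff 58 f"
proof (rule ccontr)
  assume c: "coloring 4 58 f" and n: "\<not> has_mono_square_diff 58 f"
  show False
  proof (rule L4f[of f])
    fix v :: nat assume "1 \<le> v" "v \<le> 58"
    then have "f v \<in> {1..4}" using c unfolding coloring_def by auto
    then show "f v = 1 \<or> f v = 2 \<or> f v = 3 \<or> f v = 4" by auto
  next
    fix a b x :: nat assume "1 \<le> a" "a < b" "b \<le> 58" "0 < x" "b - a = x^2"
    then show "f a \<noteq> f b" using n unfolding has_mono_square_diff_def by blast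
  qed
qed

theorem mainTheorem5:
  shows "vds_number 4 = 58
         \<and> (\<exists>f. coloring 4 57 f \<and> \<not> has_mono_square_diff 57 f)
         \<and> (\<forall>f. coloring 4 58 f \<longrightarrow> has_mono_square_diff 58 f)"
proof (intro conjI)
  show "\<forall>f. coloring 4 58 f \<longrightarrow> has_mono_square_diff 58 f" using all58 by blast
  show "\<exists>f. coloring 4 57 f \<and> \<not> has_mono_square_diff 57 f"
    using g57_coloring g57_nomono by blast
  show "vds_number 4 = 58"
    unfolding vds_number_def
  proof (rule Least_equality)
    show "58 > (0::nat) \<and> (\<forall>f. coloring 4 58 f \<longrightarrow> has_mono_square_diff 58 f)" using all58 by simp
  next
    fix m :: nat assume "m > 0 \<and> (\<forall>f. coloring 4 m f \<longrightarrow> has_mono_square_diff m f)"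
    then have m: "m > 0" "\<And>f. coloring 4 m f \<Longrightarrow> has_mono_square_diff m f" by auto
    show "58 \<le> m"
    proof (rule ccontr)
      assume "\<not> 58 \<le> m"
      then have "m \<le> 57" by simp
      then show False using m(2)[OF g57_coloring] g57_nomono by blast
    qed
  qed
qed

end
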